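(* Let $G=\mathbb Z_m*\mathbb Z_n$ with $m\ge2$, $n\ge3$, and define the subspaces of $\ell^2(G)\oplus\ell^2(G)$: $H_1=\{(a,-a): a\in\mathrm{im}(1-p)\cap\mathrm{im}(1-q)\}$, $H_2=\{(c,-c): c\in\mathrm{im}\,p+\mathrm{im}\,q\}$, $\tilde H_2=\{(pw,qv): v,w\in\ell^2(G)\}$, $H_3=\{(b,b): b\in\ell^2(G)\}$, $\tilde H_3=\{((1-p)u,(1-q)u): u\in\ell^2(G)\}$. Then there are orthogonal direct sum decompositions \[\ell^2(G)\oplus\ell^2(G)=H_1\oplus H_2\oplus H_3\qquad\text{and}\qquad \ell^2(G)\oplus\ell^2(G)=H_1\oplus\tilde H_2\oplus\tilde H_3.\]
   Context: $G=\langle s,t\mid s^m,t^n\rangle$; elements of $\mathbb CG$ act on $\ell^2(G)$ by the left regular representation; $p=\frac1m\sum_{0\le i<m}s^i$ and $q=\frac1n\sum_{0\le j<n}t^j$ are the averaging projections of the two factors. *)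

theory Defs
  imports "HOL-Analysis.Analysis" "HOL-Library.Function_Algebras"
begin

text \<open>Model of the free product G = Z_m * Z_n = <s,t | s^m, t^n> by reduced words.
  A letter is a pair (b,k): b = False means s^k (with 0 < k < m),
  b = True means t^k (with 0 < k < n).\<close>

type_synonym word = "(bool \<times> nat) list"

definition ord_of :: "nat \<Rightarrow> nat \<Rightarrow> bool \<Rightarrow> nat" where
  "ord_of m n b = (if b then n else m)"

definition reduced :: "nat \<Rightarrow> nat \<Rightarrow> word \<Rightarrow> bool" where
  "reduced m n w \<longleftrightarrow>
     (\<forall>x\<in>set w. 0 < snd x \<and> snd x < ord_of m n (fst x)) \<and>
     (\<forall>i. Suc i < length w \<longrightarrow> fst (w ! i) \<noteq> fst (w ! Suc i))"

text \<open>Left multiplication of a reduced word by the generator power (s^i if b = False, t^i if b = True).\<close>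
definition gen_mul :: "nat \<Rightarrow> nat \<Rightarrow> bool \<Rightarrow> nat \<Rightarrow> word \<Rightarrow> word" where
  "gen_mul m n b i w =
     (let N = ord_of m n b; j = i mod N in
      if j = 0 then w else
      (case w of
         [] \<Rightarrow> [(b, j)]
       | (c, k) # rest \<Rightarrow>
           if c = b then (let e = (j + k) mod N in if e = 0 then rest else (b, e) # rest)
           else (b, j) # w))"

definition l2 :: "nat \<Rightarrow> nat \<Rightarrow> (word \<Rightarrow> complex) set" where
  "l2 m n = {f. (\<forall>w. \<not> reduced m n w \<longrightarrow> f w = 0) \<and>
                 (\<lambda>w. (cmod (f w))\<^sup>2) summable_on UNIV}"

definition l2_inner :: "(word \<Rightarrow> complex) \<Rightarrow> (word \<Rightarrow> complex) \<Rightarrow> complex" where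
  "l2_inner f g = (\<Sum>\<^sub>\<infinity>w. f w * cnj (g w))"

definition l2sum_inner :: "(word \<Rightarrow> complex) \<times> (word \<Rightarrow> complex) \<Rightarrow>
    (word \<Rightarrow> complex) \<times> (word \<Rightarrow> complex) \<Rightarrow> complex" where
  "l2sum_inner u v = l2_inner (fst u) (fst v) + l2_inner (snd u) (snd v)"

text \<open>Averaging projection over the cyclic factor b, acting by the left regular representation:
  (avg f)(x) = (1/N) \<Sum>_{i<N} (\<lambda>(g^i) f)(x) = (1/N) \<Sum>_{i<N} f(g^{-i} x).\<close>
definition avg :: "nat \<Rightarrow> nat \<Rightarrow> bool \<Rightarrow> (word \<Rightarrow> complex) \<Rightarrow> (word \<Rightarrow> complex)" where
  "avg m n b f = (\<lambda>x. if reduced m n x then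
      (\<Sum>i<ord_of m n b. f (gen_mul m n b (ord_of m n b - i) x)) / of_nat (ord_of m n b)
     else 0)"

definition pP :: "nat \<Rightarrow> nat \<Rightarrow> (word \<Rightarrow> complex) \<Rightarrow> (word \<Rightarrow> complex)" where
  "pP m n = avg m n False"

definition qQ :: "nat \<Rightarrow> nat \<Rightarrow> (word \<Rightarrow> complex) \<Rightarrow> (word \<Rightarrow> complex)" where
  "qQ m n = avg m n True"

definition orth_dsum3 :: "((word \<Rightarrow> complex) \<times> (word \<Rightarrow> complex)) set \<Rightarrow> ((word \<Rightarrow> complex) \<times> (word \<Rightarrow> complex)) set \<Rightarrow> ((word \<Rightarrow> complex) \<times> (word \<Rightarrow> complex)) set \<Rightarrow> ((word \<Rightarrow> complex) \<times> (word \<Rightarrow> complex)) set \<Rightarrow> bool" where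
  "orth_dsum3 V A B C \<longleftrightarrow>
     A \<subseteq> V \<and> B \<subseteq> V \<and> C \<subseteq> V \<and>
     (\<forall>a\<in>A. \<forall>b\<in>B. l2sum_inner a b = 0) \<and>
     (\<forall>a\<in>A. \<forall>c\<in>C. l2sum_inner a c = 0) \<and>
     (\<forall>b\<in>B. \<forall>c\<in>C. l2sum_inner b c = 0) \<and>
     (\<forall>v\<in>V. \<exists>!abc. fst abc \<in> A \<and> fst (snd abc) \<in> B \<and> snd (snd abc) \<in> C \<and>
                      v = fst abc + fst (snd abc) + snd (snd abc))"

end

theory Submission
  imports Defs
begin

definition hb :: "bool \<Rightarrow> word \<Rightarrow> bool" where "hb b w = (w \<noteq> [] \<and> fst (hd w) = b)"
definition mk :: "bool \<Rightarrow> nat \<Rightarrow> word \<Rightarrow> word" where "mk b e bs = (if e = 0 then bs else (b,e) # bs)"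
definition bse :: "bool \<Rightarrow> word \<Rightarrow> word" where "bse b w = (if hb b w then tl w else w)"
definition kk :: "bool \<Rightarrow> word \<Rightarrow> nat" where "kk b w = (if hb b w then snd (hd w) else 0)"

locale fp =
  fixes m n :: nat
  assumes m2: "m \<ge> 2" and n3: "n \<ge> 3"
begin

abbreviation "N b \<equiv> ord_of m n b"
abbreviation "T b i \<equiv> gen_mul m n b i"
abbreviation "red \<equiv> reduced m n"

lemma N_ge2: "N b \<ge> 2" using m2 n3 by (auto simp: ord_of_def)
lemma N_pos: "N b > 0" using N_ge2[of b] by simp

lemma reduced_Cons: "red (x # w) \<longleftrightarrow> 0 < snd x \<and> snd x < N (fst x) \<and> red w \<and> (w \<noteq> [] \<longrightarrow> fst x \<noteq> fst (hd w))"
proof -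
  have "(\<forall>i. Suc i < length (x#w) \<longrightarrow> fst ((x#w) ! i) \<noteq> fst ((x#w) ! Suc i)) \<longleftrightarrow>
        (w \<noteq> [] \<longrightarrow> fst x \<noteq> fst (hd w)) \<and> (\<forall>i. Suc i < length w \<longrightarrow> fst (w ! i) \<noteq> fst (w ! Suc i))"
    (is "?L \<longleftrightarrow> ?R")
  proof
    assume L: ?L
    show ?R
    proof (intro conjI impI allI)
      assume "w \<noteq> []" then show "fst x \<noteq> fst (hd w)" using L[rule_format, of 0] by (cases w) auto
    next
      fix i assume "Suc i < length w" then show "fst (w ! i) \<noteq> fst (w ! Suc i)" using L[rule_format, of "Suc i"] by auto
    qed
  next
    assume R: ?R
    show ?L
    proof (intro allI impI)
      fix i assume "Suc i < length (x#w)"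
      then show "fst ((x#w) ! i) \<noteq> fst ((x#w) ! Suc i)" using R by (cases i; cases w) auto
    qed
  qed
  then show ?thesis unfolding reduced_def by auto
qed

lemma red_Nil[simp]: "red []" by (simp add: reduced_def)

lemma red_decomp:
  assumes "red w"
  shows "w = mk b (kk b w) (bse b w)" "kk b w < N b" "\<not> hb b (bse b w)" "red (bse b w)"
proof -
  show "w = mk b (kk b w) (bse b w)"
  proof (cases w)
    case (Cons x r) then show ?thesis using assms by (cases x) (auto simp: mk_def kk_def bse_def hb_def reduced_Cons)
  qed (simp add: mk_def kk_def bse_def hb_def)
  show "kk b w < N b"
  proof (cases w)
    case (Cons x r) then show ?thesis using assms N_pos[of b] by (cases x) (auto simp: kk_def hb_def reduced_Cons)
  qed (simp add: kk_def hb_def N_pos)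
  show "\<not> hb b (bse b w)"
  proof (cases w)
    case (Cons x r) then show ?thesis using assms by (cases x; cases r) (auto simp: bse_def hb_def reduced_Cons)
  qed (simp add: bse_def hb_def)
  show "red (bse b w)"
  proof (cases w)
    case (Cons x r) then show ?thesis using assms by (cases x) (auto simp: bse_def hb_def reduced_Cons)
  qed (simp add: bse_def)
qed

lemma mk_red: assumes "red bs" "\<not> hb b bs" "e < N b" shows "red (mk b e bs)"
  using assms by (cases bs) (auto simp: mk_def reduced_Cons hb_def)

lemma bse_mk: assumes "\<not> hb b bs" "e < N b" shows "bse b (mk b e bs) = bs"
  using assms by (auto simp: mk_def bse_def hb_def)

lemma kk_mk: assumes "\<not> hb b bs" "e < N b" shows "kk b (mk b e bs) = e"
  using assms by (auto simp: mk_def kk_def hb_def)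

lemma gen_mul_mk:
  assumes "\<not> hb b bs" "k < N b"
  shows "T b c (mk b k bs) = mk b ((c + k) mod N b) bs"
proof (cases "c mod N b = 0")
  case True
  then have "(c + k) mod N b = k" using assms(2) by (simp add: mod_add_left_eq[symmetric])
  then show ?thesis using True by (simp add: gen_mul_def Let_def)
next
  case False
  show ?thesis
  proof (cases "k = 0")
    case True
    then show ?thesis using False assms(1)
      by (cases bs) (auto simp: gen_mul_def Let_def mk_def hb_def split: prod.splits)
  next
    case k: False
    have "(c mod N b + k) mod N b = (c + k) mod N b" by (simp add: mod_add_left_eq)
    then show ?thesis using False k by (simp add: gen_mul_def Let_def mk_def)
  qed
qed

lemma T_formula: assumes "red w" shows "T b c w = mk b ((c + kk b w) mod N b) (bse b w)"
  using gen_mul_mk[of b "bse b w" "kk b w" c, OF red_decomp(3,2)[OF assms]] red_decomp(1)[OF assms, of b] by simp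

lemma T_red: assumes "red w" shows "red (T b c w)"
  unfolding T_formula[OF assms] using red_decomp[OF assms] N_pos by (intro mk_red) auto

lemma bse_T: assumes "red w" shows "bse b (T b c w) = bse b w"
  unfolding T_formula[OF assms] using red_decomp[OF assms] N_pos by (intro bse_mk) auto

lemma kk_T: assumes "red w" shows "kk b (T b c w) = (c + kk b w) mod N b"
  unfolding T_formula[OF assms] using red_decomp[OF assms] N_pos by (intro kk_mk) auto

lemma T_comp: assumes "red w" shows "T b a (T b c w) = T b (a + c) w"
  using T_formula[OF T_red[OF assms]] T_formula[OF assms] bse_T[OF assms] kk_T[OF assms]
  by (simp add: mod_add_right_eq add.assoc)

lemma T_mod: assumes "red w" shows "T b (c mod N b) w = T b c w"
  using T_formula[OF assms] by (simp add: mod_add_left_eq)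

lemma T_0: assumes "red w" shows "T b 0 w = w"
  using T_formula[OF assms, of b 0] red_decomp[OF assms, of b] by simp

lemma mod_inv0: "(N b - i mod N b + i) mod N b = 0"
proof -
  have lt: "i mod N b < N b" using N_pos[of b] by simp
  have e: "i = N b * (i div N b) + i mod N b" by simp
  have s: "N b * Suc (i div N b) = N b + N b * (i div N b)" by simp
  have "N b - i mod N b + i = N b * Suc (i div N b)"
    using lt e s by linarith
  then show ?thesis by simp
qed

lemma T_inv: assumes "red w" shows "T b (N b - i mod N b) (T b i w) = w"
proof -
  have "T b (N b - i mod N b) (T b i w) = T b (N b - i mod N b + i) w" by (rule T_comp[OF assms])
  also have "\<dots> = T b ((N b - i mod N b + i) mod N b) w" by (rule T_mod[OF assms, symmetric])
  also have "\<dots> = w" using mod_inv0 T_0[OF assms] by simp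
  finally show ?thesis .
qed

lemma T_inv2: assumes "red w" shows "T b i (T b (N b - i mod N b) w) = w"
proof -
  have "T b i (T b (N b - i mod N b) w) = T b (i + (N b - i mod N b)) w" by (rule T_comp[OF assms])
  also have "\<dots> = T b ((N b - i mod N b + i) mod N b) w" using T_mod[OF assms] by (simp add: add.commute)
  also have "\<dots> = w" using mod_inv0 T_0[OF assms] by simp
  finally show ?thesis .
qed

lemma T_bij: "bij_betw (T b i) {w. red w} {w. red w}"
  by (rule bij_betw_byWitness[where f' = "T b (N b - i mod N b)"]) (auto intro: T_red T_inv T_inv2)

lemma bij_rot: fixes K k :: nat assumes "K > 0" shows "bij_betw (\<lambda>i. (i + k) mod K) {..<K} {..<K}"
proof (rule bij_betw_byWitness[where f' = "\<lambda>i. (i + (K - k mod K)) mod K"])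
  show "\<forall>a\<in>{..<K}. (((a + k) mod K) + (K - k mod K)) mod K = a"
  proof
    fix a assume "a \<in> {..<K}"
    have "(((a + k) mod K) + (K - k mod K)) mod K = (a + (k mod K + (K - k mod K))) mod K"
      by (metis mod_add_left_eq mod_add_right_eq add.assoc)
    also have "k mod K + (K - k mod K) = K" using assms by (simp add: less_imp_le)
    finally show "(((a + k) mod K) + (K - k mod K)) mod K = a" using \<open>a \<in> {..<K}\<close> by simp
  qed
  show "\<forall>a\<in>{..<K}. (((a + (K - k mod K)) mod K) + k) mod K = a"
  proof
    fix a assume "a \<in> {..<K}"
    have "(((a + (K - k mod K)) mod K) + k) mod K = (a + ((K - k mod K) + k mod K)) mod K"
      by (metis mod_add_left_eq mod_add_right_eq add.assoc)
    also have "(K - k mod K) + k mod K = K" using assms by (simp add: less_imp_le)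
    finally show "(((a + (K - k mod K)) mod K) + k) mod K = a" using \<open>a \<in> {..<K}\<close> by simp
  qed
qed (use assms in auto)

lemma bij_neg: fixes K :: nat assumes "K > 0" shows "bij_betw (\<lambda>i. (K - i) mod K) {..<K} {..<K}"
proof (rule bij_betw_byWitness[where f' = "\<lambda>i. (K - i) mod K"])
  show "\<forall>a\<in>{..<K}. (K - (K - a) mod K) mod K = a"
  proof
    fix a assume "a \<in> {..<K}"
    then show "(K - (K - a) mod K) mod K = a" using assms by (cases "a = 0") auto
  qed
  then show "\<forall>a\<in>{..<K}. (K - (K - a) mod K) mod K = a" .
qed (use assms in auto)

lemma sum_T: assumes "red w" shows "(\<Sum>i<N b. g (T b i w)) = (\<Sum>e<N b. g (mk b e (bse b w)))"
proof -
  have "(\<Sum>i<N b. g (T b i w)) = (\<Sum>i<N b. (\<lambda>e. g (mk b e (bse b w))) ((i + kk b w) mod N b))"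
    using T_formula[OF assms] by simp
  also have "\<dots> = (\<Sum>e<N b. g (mk b e (bse b w)))"
    using sum.reindex_bij_betw[OF bij_rot[OF N_pos, of "kk b w" b]] by simp
  finally show ?thesis .
qed

lemma sum_T_inv: assumes "red w" shows "(\<Sum>i<N b. g (T b i (T b j w))) = (\<Sum>i<N b. g (T b i w))"
proof -
  have "bse b (T b j w) = bse b w" by (rule bse_T[OF assms])
  then show ?thesis by (simp add: sum_T[OF T_red[OF assms]] sum_T[OF assms])
qed

lemma sum_T_neg: assumes "red w" shows "(\<Sum>i<N b. g (T b (N b - i) w)) = (\<Sum>i<N b. g (T b i w))"
proof -
  have "(\<Sum>i<N b. g (T b (N b - i) w)) = (\<Sum>i<N b. (\<lambda>i. g (T b i w)) ((N b - i) mod N b))"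
    using T_mod[OF assms] by simp
  also have "\<dots> = (\<Sum>i<N b. g (T b i w))"
    using sum.reindex_bij_betw[OF bij_neg[OF N_pos[of b]]] by simp
  finally show ?thesis .
qed

lemma sum_mk: "(\<Sum>e<K. g (mk b e bs)) = (if K = 0 then 0 else g bs + (\<Sum>e\<in>{1..<K}. g ((b,e) # bs)))"
proof (cases K)
  case (Suc K')
  have "(\<Sum>e<Suc K'. g (mk b e bs)) = g (mk b 0 bs) + (\<Sum>e<K'. g (mk b (Suc e) bs))"
    by (rule sum.lessThan_Suc_shift)
  also have "(\<Sum>e<K'. g (mk b (Suc e) bs)) = (\<Sum>e\<in>{0..<K'}. g ((b,Suc e) # bs))"
    by (simp add: mk_def atLeast0LessThan)
  also have "\<dots> = (\<Sum>e\<in>{1..<Suc K'}. g ((b,e) # bs))"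
    by (simp only: One_nat_def sum.shift_bounds_Suc_ivl)
  finally show ?thesis using Suc by (simp add: mk_def)
qed simp

definition wt :: "bool \<Rightarrow> word \<Rightarrow> real" where "wt b x = (if hb b x then 2 else 3)"

lemma sum_T_mk: assumes "red w"
  shows "(\<Sum>i<N b. g (T b i w)) = g (bse b w) + (\<Sum>e\<in>{1..<N b}. g ((b,e) # bse b w))"
proof -
  have "N b \<noteq> 0" using N_pos[of b] by simp
  then show ?thesis unfolding sum_T[OF assms] sum_mk by simp
qed

lemma wt_sum: assumes "red w" shows "(\<Sum>i<N b. wt b (T b i w)) = 2 * N b + 1"
proof -
  have "(\<Sum>i<N b. wt b (T b i w)) = wt b (bse b w) + (\<Sum>e\<in>{1..<N b}. wt b ((b,e) # bse b w))"
    by (rule sum_T_mk[OF assms])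
  also have "(\<Sum>e\<in>{1..<N b}. wt b ((b,e) # bse b w)) = (\<Sum>e\<in>{1..<N b}. 2)"
    by (simp add: wt_def hb_def)
  also have "wt b (bse b w) = 3" using red_decomp(3)[OF assms, of b] by (simp add: wt_def)
  finally show ?thesis using N_pos[of b] by (simp add: of_nat_diff)
qed

lemma wt_pos: "wt b x > 0" by (simp add: wt_def)

lemma wt_inv_sum: assumes "red w" shows "(\<Sum>i<N (\<not>b). 1 / wt b (T (\<not>b) i w)) \<le> (2 * N (\<not>b) + 1) / 6"
proof -
  have "(\<Sum>i<N (\<not>b). 1 / wt b (T (\<not>b) i w)) = 1 / wt b (bse (\<not>b) w) + (\<Sum>e\<in>{1..<N (\<not>b)}. 1 / wt b ((\<not>b,e) # bse (\<not>b) w))"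
    by (rule sum_T_mk[OF assms])
  also have "(\<Sum>e\<in>{1..<N (\<not>b)}. 1 / wt b ((\<not>b,e) # bse (\<not>b) w)) = (\<Sum>e\<in>{1..<N (\<not>b)}. 1/3)"
    by (simp add: wt_def hb_def)
  also have "1 / wt b (bse (\<not>b) w) \<le> 1/2" by (simp add: wt_def)
  finally show ?thesis using N_pos[of "\<not>b"] by (simp add: of_nat_diff field_simps)
qed

end

definition nsq :: "(word \<Rightarrow> complex) \<Rightarrow> real" where
  "nsq f = (\<Sum>\<^sub>\<infinity>w. (cmod (f w))\<^sup>2)"

definition sqs :: "(word \<Rightarrow> complex) \<Rightarrow> bool" where
  "sqs f \<longleftrightarrow> (\<lambda>w. (cmod (f w))\<^sup>2) summable_on UNIV"

lemma sq_add_le: "(cmod (a + b))\<^sup>2 \<le> 2 * (cmod a)\<^sup>2 + 2 * (cmod b)\<^sup>2"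
proof -
  have "cmod (a + b) \<le> cmod a + cmod b" by (rule norm_triangle_ineq)
  then have "(cmod (a + b))\<^sup>2 \<le> (cmod a + cmod b)\<^sup>2" by (simp add: power_mono)
  also have "\<dots> \<le> 2 * (cmod a)\<^sup>2 + 2 * (cmod b)\<^sup>2"
  proof -
    have "0 \<le> (cmod a - cmod b)\<^sup>2" by simp
    then show ?thesis by (simp add: power2_diff power2_sum)
  qed
  finally show ?thesis .
qed

lemma sqs_add: "sqs f \<Longrightarrow> sqs g \<Longrightarrow> sqs (f + g)"
  unfolding sqs_def
  by (rule summable_on_comparison_test[where f="\<lambda>w. 2 * (cmod (f w))\<^sup>2 + 2 * (cmod (g w))\<^sup>2"])
     (auto intro!: summable_on_add summable_on_cmult_right sq_add_le)

lemma sqs_uminus: "sqs f \<Longrightarrow> sqs (- f)" unfolding sqs_def by simp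

lemma sqs_diff: "sqs f \<Longrightarrow> sqs g \<Longrightarrow> sqs (f - g)"
  using sqs_add[of f "- g"] sqs_uminus[of g] by simp

lemma sqs_scale: "sqs f \<Longrightarrow> sqs (\<lambda>w. c * f w)"
  unfolding sqs_def by (simp add: norm_mult power_mult_distrib summable_on_cmult_right)

lemma sqs_zero: "sqs 0" unfolding sqs_def by simp

lemma nsq_nonneg: "nsq f \<ge> 0" unfolding nsq_def by (rule infsum_nonneg) simp

lemma nsq_eq0: assumes "sqs f" "nsq f = 0" shows "f = 0"
proof
  fix w
  have "(cmod (f w))\<^sup>2 = 0"
    using assms by (intro nonneg_infsum_le_0D[where A=UNIV]) (auto simp: nsq_def sqs_def)
  then show "f w = 0 w" by simp
qed

lemma abs_le_half: "cmod a * cmod b \<le> ((cmod a)\<^sup>2 + (cmod b)\<^sup>2) / 2"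
proof -
  have "0 \<le> (cmod a - cmod b)\<^sup>2" by simp
  then show ?thesis by (simp add: power2_diff)
qed

definition ip :: "(word \<Rightarrow> complex) \<Rightarrow> (word \<Rightarrow> complex) \<Rightarrow> complex" where
  "ip f g = (\<Sum>\<^sub>\<infinity>w. f w * cnj (g w))"

lemma ip_summable: assumes "sqs f" "sqs g" shows "(\<lambda>w. f w * cnj (g w)) summable_on UNIV"
proof (rule abs_summable_summable)
  show "(\<lambda>w. norm (f w * cnj (g w))) summable_on UNIV"
  proof (rule summable_on_comparison_test[where f="\<lambda>w. ((cmod (f w))\<^sup>2 + (cmod (g w))\<^sup>2) * (1/2)"])
    show "(\<lambda>w. ((cmod (f w))\<^sup>2 + (cmod (g w))\<^sup>2) * (1/2)) summable_on UNIV"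
      using assms unfolding sqs_def by (intro summable_on_add summable_on_cmult_left) 
    fix x show "norm (f x * cnj (g x)) \<le> ((cmod (f x))\<^sup>2 + (cmod (g x))\<^sup>2) * (1/2)"
      using abs_le_half[of "f x" "g x"] by (simp add: norm_mult)
  qed simp
qed

lemma ip_add_left: "sqs f \<Longrightarrow> sqs g \<Longrightarrow> sqs h \<Longrightarrow> ip (f + g) h = ip f h + ip g h"
  unfolding ip_def by (simp add: distrib_right infsum_add ip_summable)

lemma ip_add_right: "sqs f \<Longrightarrow> sqs g \<Longrightarrow> sqs h \<Longrightarrow> ip f (g + h) = ip f g + ip f h"
  unfolding ip_def by (simp add: distrib_left infsum_add ip_summable)

lemma ip_uminus_left: "ip (- f) g = - ip f g"
  unfolding ip_def by (simp add: infsum_uminus)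

lemma ip_uminus_right: "ip f (- g) = - ip f g"
  unfolding ip_def by (simp add: infsum_uminus)

lemma ip_diff_left: "sqs f \<Longrightarrow> sqs g \<Longrightarrow> sqs h \<Longrightarrow> ip (f - g) h = ip f h - ip g h"
  using ip_add_left[of f "- g" h] sqs_uminus[of g] by (simp add: ip_uminus_left)

lemma ip_diff_right: "sqs f \<Longrightarrow> sqs g \<Longrightarrow> sqs h \<Longrightarrow> ip f (g - h) = ip f g - ip f h"
  using ip_add_right[of f g "- h"] sqs_uminus[of h] by (simp add: ip_uminus_right)

lemma ip_scale_left: "ip (\<lambda>w. c * f w) g = c * ip f g"
proof (cases "c = 0")
  case False
  have "ip (\<lambda>w. c * f w) g = (\<Sum>\<^sub>\<infinity>w. c * (f w * cnj (g w)))" unfolding ip_def by (simp add: mult.assoc)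
  also have "\<dots> = c * ip f g" unfolding ip_def by (rule infsum_cmult_right')
  finally show ?thesis .
qed (simp add: ip_def)

lemma ip_scale_right: "ip f (\<lambda>w. c * g w) = cnj c * ip f g"
proof -
  have "ip f (\<lambda>w. c * g w) = (\<Sum>\<^sub>\<infinity>w. cnj c * (f w * cnj (g w)))" unfolding ip_def by (simp add: algebra_simps)
  also have "\<dots> = cnj c * ip f g" unfolding ip_def by (rule infsum_cmult_right')
  finally show ?thesis .
qed

lemma ip_sum_left:
  assumes "finite I" "\<And>i. i \<in> I \<Longrightarrow> sqs (F i)" "sqs g"
  shows "ip (\<lambda>w. \<Sum>i\<in>I. F i w) g = (\<Sum>i\<in>I. ip (F i) g)"
  using assms
proof (induction I rule: finite_induct)
  case empty then show ?case by (simp add: ip_def)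
next
  case (insert a I)
  have s: "sqs (\<lambda>w. \<Sum>i\<in>I. F i w)"
    using insert(1) insert(4)
  proof (induction I rule: finite_induct)
    case empty then show ?case using sqs_zero by (simp add: zero_fun_def)
  next
    case (insert b J)
    then have "sqs (F b + (\<lambda>w. \<Sum>i\<in>J. F i w))" by (intro sqs_add) auto
    then show ?case using insert by (simp add: plus_fun_def)
  qed
  have "ip (\<lambda>w. \<Sum>i\<in>insert a I. F i w) g = ip (F a + (\<lambda>w. \<Sum>i\<in>I. F i w)) g"
    using insert(1,2) by (simp add: plus_fun_def)
  also have "\<dots> = ip (F a) g + ip (\<lambda>w. \<Sum>i\<in>I. F i w) g"
    using insert s by (intro ip_add_left) auto
  finally show ?case using insert by simp
qed

lemma ip_cnj: "ip g f = cnj (ip f g)"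
proof -
  have "cnj (ip f g) = (\<Sum>\<^sub>\<infinity>w. cnj (f w * cnj (g w)))" unfolding ip_def by (rule infsum_cnj[symmetric])
  then show ?thesis unfolding ip_def by (simp add: mult.commute)
qed

lemma ip_sum_right:
  assumes "finite I" "\<And>i. i \<in> I \<Longrightarrow> sqs (F i)" "sqs g"
  shows "ip g (\<lambda>w. \<Sum>i\<in>I. F i w) = (\<Sum>i\<in>I. ip g (F i))"
  using ip_sum_left[OF assms] by (simp add: ip_cnj[of g])

lemma ip_self: assumes "sqs f" shows "ip f f = of_real (nsq f)"
proof -
  have "((\<lambda>w. (cmod (f w))\<^sup>2) has_sum nsq f) UNIV"
    using assms unfolding sqs_def nsq_def by (simp add: has_sum_infsum)
  then have "((\<lambda>w. complex_of_real ((cmod (f w))\<^sup>2)) has_sum of_real (nsq f)) UNIV"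
    by (rule has_sum_of_real)
  then show ?thesis unfolding ip_def complex_norm_square by (rule infsumI)
qed

lemma infsum_sum_fin:
  fixes g :: "'i \<Rightarrow> 'a \<Rightarrow> 'b::{topological_comm_monoid_add, t2_space}"
  assumes "finite I" "\<And>i. i \<in> I \<Longrightarrow> g i summable_on A"
  shows "(\<lambda>x. \<Sum>i\<in>I. g i x) summable_on A \<and> infsum (\<lambda>x. \<Sum>i\<in>I. g i x) A = (\<Sum>i\<in>I. infsum (g i) A)"
  using assms
proof (induction I rule: finite_induct)
  case empty then show ?case by simp
next
  case (insert a I)
  then have IH: "(\<lambda>x. \<Sum>i\<in>I. g i x) summable_on A" "infsum (\<lambda>x. \<Sum>i\<in>I. g i x) A = (\<Sum>i\<in>I. infsum (g i) A)"
    by auto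
  have ga: "g a summable_on A" using insert by auto
  show ?case using insert(1,2) IH ga by (simp add: summable_on_add infsum_add)
qed

definition shf :: "nat \<Rightarrow> nat \<Rightarrow> bool \<Rightarrow> nat \<Rightarrow> (word \<Rightarrow> complex) \<Rightarrow> word \<Rightarrow> complex" where
  "shf m n b i g = (\<lambda>x. if reduced m n x then g (gen_mul m n b i x) else 0)"

lemma wcs:
  fixes a :: "'i \<Rightarrow> complex"
  assumes "finite I" "\<And>i. i \<in> I \<Longrightarrow> w i > 0"
  shows "(cmod (\<Sum>i\<in>I. a i))\<^sup>2 \<le> (\<Sum>i\<in>I. w i) * (\<Sum>i\<in>I. (cmod (a i))\<^sup>2 / w i)"
proof -
  have "cmod (\<Sum>i\<in>I. a i) \<le> (\<Sum>i\<in>I. cmod (a i))" by (rule norm_sum)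
  then have "(cmod (\<Sum>i\<in>I. a i))\<^sup>2 \<le> (\<Sum>i\<in>I. cmod (a i))\<^sup>2" by (simp add: power_mono)
  also have "(\<Sum>i\<in>I. cmod (a i)) = (\<Sum>i\<in>I. sqrt (w i) * (cmod (a i) / sqrt (w i)))"
  proof (rule sum.cong[OF refl])
    fix i assume "i \<in> I"
    then have "sqrt (w i) > 0" using assms(2) by simp
    then show "cmod (a i) = sqrt (w i) * (cmod (a i) / sqrt (w i))" by simp
  qed
  also have "(\<dots>)\<^sup>2 \<le> (\<Sum>i\<in>I. (sqrt (w i))\<^sup>2) * (\<Sum>i\<in>I. (cmod (a i) / sqrt (w i))\<^sup>2)"
    by (rule Cauchy_Schwarz_ineq_sum)
  also have "\<dots> = (\<Sum>i\<in>I. w i) * (\<Sum>i\<in>I. (cmod (a i))\<^sup>2 / w i)"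
    using assms(2) by (intro arg_cong2[where f="(*)"] sum.cong) (auto simp: power_divide less_imp_le)
  finally show ?thesis .
qed

context fp
begin

abbreviation "L \<equiv> l2 m n"
abbreviation "sh \<equiv> shf m n"

lemma L_iff: "f \<in> L \<longleftrightarrow> (\<forall>w. \<not> red w \<longrightarrow> f w = 0) \<and> sqs f"
  by (simp add: l2_def sqs_def)

lemma L_sqs: "f \<in> L \<Longrightarrow> sqs f" by (simp add: L_iff)
lemma L_zero_off: "f \<in> L \<Longrightarrow> \<not> red w \<Longrightarrow> f w = 0" by (simp add: L_iff)

lemma L_add: "f \<in> L \<Longrightarrow> g \<in> L \<Longrightarrow> f + g \<in> L" by (simp add: L_iff sqs_add)
lemma L_uminus: "f \<in> L \<Longrightarrow> - f \<in> L" by (simp add: L_iff sqs_uminus)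
lemma L_diff: "f \<in> L \<Longrightarrow> g \<in> L \<Longrightarrow> f - g \<in> L" by (simp add: L_iff sqs_diff)
lemma L_scale: "f \<in> L \<Longrightarrow> (\<lambda>w. c * f w) \<in> L" by (simp add: L_iff sqs_scale)
lemma L_zero: "0 \<in> L" by (simp add: L_iff sqs_zero)

lemma shift:
  fixes h :: "word \<Rightarrow> 'b::{comm_monoid_add, t2_space}"
  assumes "\<And>x. \<not> red x \<Longrightarrow> h x = 0"
  shows "infsum (\<lambda>x. if red x then h (T b i x) else 0) UNIV = infsum h UNIV"
proof -
  have "infsum (\<lambda>x. if red x then h (T b i x) else 0) UNIV = infsum (\<lambda>x. h (T b i x)) {x. red x}"
    by (rule infsum_cong_neutral) auto
  also have "\<dots> = infsum h {x. red x}" by (rule infsum_reindex_bij_betw[OF T_bij])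
  also have "\<dots> = infsum h UNIV" by (rule infsum_cong_neutral) (auto simp: assms)
  finally show ?thesis .
qed

lemma shift_summable:
  fixes h :: "word \<Rightarrow> 'b::{comm_monoid_add, t2_space}"
  assumes "\<And>x. \<not> red x \<Longrightarrow> h x = 0"
  shows "(\<lambda>x. if red x then h (T b i x) else 0) summable_on UNIV \<longleftrightarrow> h summable_on UNIV"
proof -
  have "(\<lambda>x. if red x then h (T b i x) else 0) summable_on UNIV \<longleftrightarrow> (\<lambda>x. h (T b i x)) summable_on {x. red x}"
    by (rule summable_on_cong_neutral) auto
  also have "\<dots> \<longleftrightarrow> h summable_on {x. red x}" by (rule summable_on_reindex_bij_betw[OF T_bij])
  also have "\<dots> \<longleftrightarrow> h summable_on UNIV" by (rule summable_on_cong_neutral) (auto simp: assms)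
  finally show ?thesis .
qed

lemma shift_sum:
  fixes h :: "word \<Rightarrow> real"
  assumes "\<And>x. \<not> red x \<Longrightarrow> h x = 0" "h summable_on UNIV"
  shows "(\<lambda>x. if red x then (\<Sum>i<N b. h (T b i x)) else 0) summable_on UNIV"
    and "infsum (\<lambda>x. if red x then (\<Sum>i<N b. h (T b i x)) else 0) UNIV = N b * infsum h UNIV"
proof -
  have e: "(\<lambda>x. if red x then (\<Sum>i<N b. h (T b i x)) else 0) = (\<lambda>x. \<Sum>i<N b. (if red x then h (T b i x) else 0))"
    by auto
  have s: "\<And>i. (\<lambda>x. if red x then h (T b i x) else 0) summable_on UNIV"
    using shift_summable[of h b, OF assms(1)] assms(2) by blast
  note r = infsum_sum_fin[of "{..<N b}" "\<lambda>i x. if red x then h (T b i x) else 0" UNIV, OF _ s]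
  show "(\<lambda>x. if red x then (\<Sum>i<N b. h (T b i x)) else 0) summable_on UNIV"
    unfolding e using r by simp
  show "infsum (\<lambda>x. if red x then (\<Sum>i<N b. h (T b i x)) else 0) UNIV = N b * infsum h UNIV"
    unfolding e using r shift[of h b, OF assms(1)] by simp
qed

lemma sh_L: assumes "g \<in> L" shows "sh b i g \<in> L" and "nsq (sh b i g) = nsq g"
proof -
  have z: "\<And>x. \<not> red x \<Longrightarrow> (cmod (g x))\<^sup>2 = 0" using assms by (simp add: L_zero_off)
  have e: "(\<lambda>x. (cmod (sh b i g x))\<^sup>2) = (\<lambda>x. if red x then (cmod (g (T b i x)))\<^sup>2 else 0)"
    by (auto simp: shf_def)
  show "sh b i g \<in> L" unfolding L_iff sqs_def e
    using shift_summable[of "\<lambda>x. (cmod (g x))\<^sup>2" b i, OF z] assms by (auto simp: shf_def L_iff sqs_def)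
  show "nsq (sh b i g) = nsq g" unfolding nsq_def e using shift[of "\<lambda>x. (cmod (g x))\<^sup>2" b i, OF z] by simp
qed

lemma avg_eq: "avg m n b f x = (if red x then (\<Sum>i<N b. f (T b i x)) / of_nat (N b) else 0)"
  unfolding avg_def using sum_T_neg[where w=x and b=b and g=f] by simp

lemma avg_sh: "avg m n b f = (\<lambda>x. (1 / of_nat (N b)) * (\<Sum>i<N b. sh b i f x))"
  by (rule ext) (simp add: avg_eq shf_def)

lemma avg_L: assumes "f \<in> L" shows "avg m n b f \<in> L" and "nsq (avg m n b f) \<le> nsq f"
proof -
  define h where "h x = (cmod (f x))\<^sup>2" for x
  have hz: "\<And>x. \<not> red x \<Longrightarrow> h x = 0" using assms by (simp add: h_def L_zero_off)
  have hs: "h summable_on UNIV" using assms unfolding h_def by (simp add: L_iff sqs_def)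
  define G where "G x = (if red x then (\<Sum>i<N b. h (T b i x)) else 0)" for x
  have Gs: "G summable_on UNIV" unfolding G_def by (rule shift_sum(1)[OF hz hs])
  have Gi: "infsum G UNIV = N b * infsum h UNIV" unfolding G_def by (rule shift_sum(2)[OF hz hs])
  have Np: "real (N b) > 0" using N_pos[of b] by simp
  have pw: "(cmod (avg m n b f x))\<^sup>2 \<le> G x * (1 / N b)" for x
  proof (cases "red x")
    case True
    have "(cmod (\<Sum>i<N b. f (T b i x)))\<^sup>2 \<le> (\<Sum>i<N b. (1::real)) * (\<Sum>i<N b. (cmod (f (T b i x)))\<^sup>2 / 1)"
      by (rule wcs) auto
    then have "(cmod (\<Sum>i<N b. f (T b i x)))\<^sup>2 \<le> N b * G x" using True by (simp add: G_def h_def)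
    then have "N b * (cmod (\<Sum>i<N b. f (T b i x)))\<^sup>2 \<le> N b * (N b * G x)" using Np
      by (intro mult_left_mono) (auto simp: mult.commute)
    then show ?thesis using True Np by (simp add: avg_eq norm_divide power_divide field_simps power2_eq_square)
  qed (simp add: avg_eq G_def)
  have s: "(\<lambda>x. (cmod (avg m n b f x))\<^sup>2) summable_on UNIV"
    by (rule summable_on_comparison_test[OF summable_on_cmult_left[OF Gs, of "1 / N b"]]) (use pw in auto)
  show "avg m n b f \<in> L" unfolding L_iff sqs_def using s by (simp add: avg_eq)
  have "nsq (avg m n b f) \<le> infsum (\<lambda>x. G x * (1 / N b)) UNIV"
    unfolding nsq_def by (rule infsum_mono[OF s summable_on_cmult_left[OF Gs]]) (use pw in auto)
  also have "\<dots> = infsum G UNIV * (1 / N b)" by (rule infsum_cmult_left) (use Gs in auto)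
  also have "\<dots> = nsq f" using Gi Np unfolding nsq_def h_def by simp
  finally show "nsq (avg m n b f) \<le> nsq f" .
qed

end

context fp
begin

lemma avg_add: "avg m n b (f + g) = avg m n b f + avg m n b g"
  by (rule ext) (simp add: avg_eq sum.distrib add_divide_distrib)

lemma avg_uminus: "avg m n b (- f) = - avg m n b f"
  by (rule ext) (simp add: avg_eq sum_negf)

lemma avg_diff: "avg m n b (f - g) = avg m n b f - avg m n b g"
  by (rule ext) (simp add: avg_eq sum_subtractf diff_divide_distrib)

lemma avg_scale: "avg m n b (\<lambda>w. c * f w) = (\<lambda>w. c * avg m n b f w)"
  by (rule ext) (simp add: avg_eq sum_distrib_left)

lemma avg_zero: "avg m n b 0 = 0"
  by (rule ext) (simp add: avg_eq)

lemma avg_inv: "red x \<Longrightarrow> avg m n b f (T b j x) = avg m n b f x"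
  by (simp add: avg_eq T_red sum_T_inv)

lemma avg_fix:
  assumes "f \<in> L" "\<And>x j. red x \<Longrightarrow> f (T b j x) = f x"
  shows "avg m n b f = f"
proof
  fix x
  show "avg m n b f x = f x"
  proof (cases "red x")
    case True
    have "(\<Sum>i<N b. f (T b i x)) = (\<Sum>i<N b. f x)" using assms(2) True by simp
    then show ?thesis using True N_pos[of b] by (simp add: avg_eq)
  qed (simp add: avg_eq L_zero_off[OF assms(1)])
qed

lemma avg_idem: assumes "f \<in> L" shows "avg m n b (avg m n b f) = avg m n b f"
  by (rule avg_fix[OF avg_L(1)[OF assms]]) (rule avg_inv)

lemma sh_adj:
  assumes "f \<in> L" "g \<in> L"
  shows "ip (sh b i f) g = ip f (sh b (N b - i mod N b) g)"
proof -
  define H where "H x = f x * cnj (sh b (N b - i mod N b) g x)" for x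
  have Hz: "\<And>x. \<not> red x \<Longrightarrow> H x = 0" using assms(1) by (simp add: H_def L_zero_off)
  have "ip (sh b i f) g = infsum (\<lambda>x. if red x then H (T b i x) else 0) UNIV"
    unfolding ip_def
    by (rule infsum_cong) (auto simp: H_def shf_def T_red T_inv)
  also have "\<dots> = infsum H UNIV" by (rule shift[OF Hz])
  also have "\<dots> = ip f (sh b (N b - i mod N b) g)" unfolding ip_def H_def ..
  finally show ?thesis .
qed

lemma avg_adj:
  assumes "f \<in> L" "g \<in> L"
  shows "ip (avg m n b f) g = ip f (avg m n b g)"
proof -
  define c :: complex where "c = 1 / of_nat (N b)"
  have cc: "cnj c = c" by (simp add: c_def)
  have shs: "\<And>i h. h \<in> L \<Longrightarrow> sqs (sh b i h)" using sh_L(1) L_sqs by blast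
  have "ip (avg m n b f) g = c * ip (\<lambda>x. \<Sum>i<N b. sh b i f x) g"
    unfolding avg_sh c_def by (rule ip_scale_left)
  also have "ip (\<lambda>x. \<Sum>i<N b. sh b i f x) g = (\<Sum>i<N b. ip (sh b i f) g)"
    by (rule ip_sum_left) (use assms shs L_sqs in auto)
  also have "\<dots> = (\<Sum>i<N b. ip f (sh b (N b - i mod N b) g))"
    using sh_adj[OF assms] by simp
  also have "\<dots> = ip f (\<lambda>x. \<Sum>i<N b. sh b (N b - i mod N b) g x)"
    by (rule ip_sum_right[symmetric]) (use assms shs L_sqs in auto)
  also have "(\<lambda>x. \<Sum>i<N b. sh b (N b - i mod N b) g x) = (\<lambda>x. \<Sum>i<N b. sh b i g x)"
  proof
    fix x
    have "(\<Sum>i<N b. sh b (N b - i mod N b) g x) = (\<Sum>i<N b. sh b (N b - i) g x)"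
      by (rule sum.cong) auto
    also have "\<dots> = (\<Sum>i<N b. sh b i g x)"
      by (cases "red x") (simp_all add: shf_def sum_T_neg)
    finally show "(\<Sum>i<N b. sh b (N b - i mod N b) g x) = (\<Sum>i<N b. sh b i g x)" .
  qed
  finally have "ip (avg m n b f) g = c * ip f (\<lambda>x. \<Sum>i<N b. sh b i g x)" .
  also have "\<dots> = ip f (avg m n b g)"
    unfolding avg_sh c_def[symmetric] ip_scale_right cc ..
  finally show ?thesis .
qed

lemma key:
  assumes "y \<in> L" "\<And>x j. red x \<Longrightarrow> y (T (\<not>b) j x) = y x"
  shows "nsq (avg m n b y) \<le> (2 * N b + 1) * (2 * N (\<not>b) + 1) / (6 * N b * N (\<not>b)) * nsq y"
proof -
  define h where "h x = (cmod (y x))\<^sup>2 / wt b x" for x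
  define Q where "Q x = (cmod (y x))\<^sup>2" for x
  have Qs: "Q summable_on UNIV" using assms(1) unfolding Q_def by (simp add: L_iff sqs_def)
  have hz: "\<And>x. \<not> red x \<Longrightarrow> h x = 0" using assms(1) by (simp add: h_def L_zero_off)
  have hle: "h x \<le> Q x" for x
    using wt_pos[of b x] by (simp add: h_def Q_def wt_def divide_le_eq)
  have h0: "h x \<ge> 0" for x using wt_pos[of b x] by (simp add: h_def)
  have hs: "h summable_on UNIV"
    by (rule summable_on_comparison_test[OF Qs]) (use hle h0 in auto)
  define G where "G x = (if red x then (\<Sum>i<N b. h (T b i x)) else 0)" for x
  have Gs: "G summable_on UNIV" unfolding G_def by (rule shift_sum(1)[OF hz hs])
  have Gi: "infsum G UNIV = N b * infsum h UNIV" unfolding G_def by (rule shift_sum(2)[OF hz hs])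
  define G' where "G' x = (if red x then (\<Sum>i<N (\<not>b). h (T (\<not>b) i x)) else 0)" for x
  have G's: "G' summable_on UNIV" unfolding G'_def by (rule shift_sum(1)[OF hz hs])
  have G'i: "infsum G' UNIV = N (\<not>b) * infsum h UNIV" unfolding G'_def by (rule shift_sum(2)[OF hz hs])
  have Np: "real (N b) > 0" "real (N (\<not>b)) > 0" using N_pos by auto
  define A where "A = (2 * real (N b) + 1) / (real (N b))\<^sup>2"
  have pw: "(cmod (avg m n b y x))\<^sup>2 \<le> G x * A" for x
  proof (cases "red x")
    case True
    have "(cmod (\<Sum>i<N b. y (T b i x)))\<^sup>2 \<le> (\<Sum>i<N b. wt b (T b i x)) * (\<Sum>i<N b. (cmod (y (T b i x)))\<^sup>2 / wt b (T b i x))"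
      by (rule wcs) (auto intro: wt_pos)
    also have "\<dots> = (2 * N b + 1) * G x" using True by (simp add: wt_sum G_def h_def)
    finally have "(cmod (\<Sum>i<N b. y (T b i x)))\<^sup>2 \<le> (2 * N b + 1) * G x" .
    then show ?thesis using True Np by (simp add: avg_eq norm_divide power_divide A_def field_simps)
  qed (simp add: avg_eq G_def)
  have s: "(\<lambda>x. (cmod (avg m n b y x))\<^sup>2) summable_on UNIV"
    by (rule summable_on_comparison_test[OF summable_on_cmult_left[OF Gs, of A]]) (use pw in auto)
  have "nsq (avg m n b y) \<le> infsum (\<lambda>x. G x * A) UNIV"
    unfolding nsq_def by (rule infsum_mono[OF s summable_on_cmult_left[OF Gs]]) (use pw in auto)
  also have "\<dots> = infsum G UNIV * A" by (rule infsum_cmult_left) (use Gs in auto)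
  also have "\<dots> = (2 * N b + 1) / N b * infsum h UNIV" using Gi Np by (simp add: A_def power2_eq_square)
  finally have S1: "nsq (avg m n b y) \<le> (2 * N b + 1) / N b * infsum h UNIV" .
  have pw2: "G' x \<le> Q x * ((2 * N (\<not>b) + 1) / 6)" for x
  proof (cases "red x")
    case True
    have "(\<Sum>i<N (\<not>b). h (T (\<not>b) i x)) = Q x * (\<Sum>i<N (\<not>b). 1 / wt b (T (\<not>b) i x))"
      using True assms(2) by (simp add: h_def Q_def sum_distrib_left)
    also have "\<dots> \<le> Q x * ((2 * N (\<not>b) + 1) / 6)"
      by (rule mult_left_mono[OF wt_inv_sum[OF True]]) (simp add: Q_def)
    finally show ?thesis using True by (simp add: G'_def)
  qed (simp add: G'_def Q_def)
  have "N (\<not>b) * infsum h UNIV \<le> infsum (\<lambda>x. Q x * ((2 * N (\<not>b) + 1) / 6)) UNIV"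
    unfolding G'i[symmetric] by (rule infsum_mono[OF G's summable_on_cmult_left[OF Qs]]) (use pw2 in auto)
  also have "\<dots> = infsum Q UNIV * ((2 * N (\<not>b) + 1) / 6)" by (rule infsum_cmult_left) (use Qs in auto)
  also have "infsum Q UNIV = nsq y" unfolding nsq_def Q_def ..
  finally have S2: "infsum h UNIV \<le> nsq y * ((2 * N (\<not>b) + 1) / 6) / N (\<not>b)"
    using Np by (simp add: field_simps)
  have "nsq (avg m n b y) \<le> (2 * N b + 1) / N b * (nsq y * ((2 * N (\<not>b) + 1) / 6) / N (\<not>b))"
    by (rule order_trans[OF S1 mult_left_mono[OF S2]]) simp
  then show ?thesis by (simp add: field_simps)
qed

end

definition nrm :: "(word \<Rightarrow> complex) \<Rightarrow> real" where "nrm f = sqrt (nsq f)"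

lemma nsq_zero[simp]: "nsq 0 = 0" by (simp add: nsq_def)

lemma nrm_nonneg: "nrm f \<ge> 0" by (simp add: nrm_def nsq_nonneg)

lemma sq_add_t:
  assumes "t > 0"
  shows "(cmod (a + b))\<^sup>2 \<le> (1 + t) * (cmod a)\<^sup>2 + (1 + 1/t) * (cmod b)\<^sup>2"
proof -
  have "cmod (a + b) \<le> cmod a + cmod b" by (rule norm_triangle_ineq)
  then have "(cmod (a + b))\<^sup>2 \<le> (cmod a + cmod b)\<^sup>2" by (simp add: power_mono)
  also have "\<dots> = (cmod a)\<^sup>2 + 2 * cmod a * cmod b + (cmod b)\<^sup>2" by (simp add: power2_sum)
  also have "2 * cmod a * cmod b \<le> t * (cmod a)\<^sup>2 + (1/t) * (cmod b)\<^sup>2"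
  proof -
    have "0 \<le> (t * cmod a - cmod b)\<^sup>2" by simp
    then have "0 \<le> t\<^sup>2 * (cmod a)\<^sup>2 - 2 * t * cmod a * cmod b + (cmod b)\<^sup>2"
      by (simp add: power2_diff power_mult_distrib)
    then have "t * (2 * cmod a * cmod b) \<le> t * (t * (cmod a)\<^sup>2 + (1/t) * (cmod b)\<^sup>2)"
      using assms by (simp add: algebra_simps power2_eq_square)
    then show ?thesis using assms by (simp add: mult_le_cancel_left_pos)
  qed
  finally show ?thesis by (simp add: algebra_simps)
qed

lemma nsq_triangle:
  assumes "sqs f" "sqs g"
  shows "nsq (f + g) \<le> (nrm f + nrm g)\<^sup>2"
proof (cases "nsq f = 0 \<or> nsq g = 0")
  case True
  then show ?thesis
  proof
    assume "nsq f = 0" then have "f = 0" by (rule nsq_eq0[OF assms(1)])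
    then show ?thesis by (simp add: nrm_def nsq_nonneg)
  next
    assume "nsq g = 0" then have "g = 0" by (rule nsq_eq0[OF assms(2)])
    then show ?thesis by (simp add: nrm_def nsq_nonneg)
  qed
next
  case False
  then have F: "nrm f > 0" and G: "nrm g > 0" using nsq_nonneg[of f] nsq_nonneg[of g]
    by (auto simp: nrm_def)
  define t where "t = nrm g / nrm f"
  have t: "t > 0" using F G by (simp add: t_def)
  have s: "(\<lambda>w. (1 + t) * (cmod (f w))\<^sup>2 + (1 + 1/t) * (cmod (g w))\<^sup>2) summable_on UNIV"
    using assms unfolding sqs_def by (intro summable_on_add summable_on_cmult_right)
  have s2: "(\<lambda>w. (cmod ((f + g) w))\<^sup>2) summable_on UNIV" using sqs_add[OF assms] by (simp add: sqs_def)
  have "nsq (f + g) \<le> infsum (\<lambda>w. (1 + t) * (cmod (f w))\<^sup>2 + (1 + 1/t) * (cmod (g w))\<^sup>2) UNIV"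
    unfolding nsq_def by (rule infsum_mono[OF s2 s]) (simp add: sq_add_t[OF t])
  also have "\<dots> = (1 + t) * nsq f + (1 + 1/t) * nsq g"
    using assms unfolding sqs_def nsq_def
    by (simp add: infsum_add summable_on_cmult_right infsum_cmult_right')
  also have "nsq f = (nrm f)\<^sup>2" "nsq g = (nrm g)\<^sup>2" using nsq_nonneg by (auto simp: nrm_def)
  then have "(1 + t) * nsq f + (1 + 1/t) * nsq g = (nrm f + nrm g)\<^sup>2"
    using F G by (simp add: t_def field_simps power2_eq_square)
  finally show ?thesis .
qed

lemma nrm_triangle: "sqs f \<Longrightarrow> sqs g \<Longrightarrow> nrm (f + g) \<le> nrm f + nrm g"
proof -
  assume a: "sqs f" "sqs g"
  have "nrm (f + g) \<le> sqrt ((nrm f + nrm g)\<^sup>2)"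
    unfolding nrm_def[of "f + g"] by (rule real_sqrt_le_mono[OF nsq_triangle[OF a]])
  also have "\<dots> = nrm f + nrm g" using nrm_nonneg[of f] nrm_nonneg[of g] by simp
  finally show ?thesis .
qed

lemma nrm_uminus: "nrm (- f) = nrm f" by (simp add: nrm_def nsq_def)

lemma nrm_diff_sym: "nrm (f - g) = nrm (g - f)"
  using nrm_uminus[of "g - f"] by simp

lemma nrm_diff_tri: "sqs f \<Longrightarrow> sqs g \<Longrightarrow> sqs h \<Longrightarrow> nrm (f - h) \<le> nrm (f - g) + nrm (g - h)"
  using nrm_triangle[of "f - g" "g - h"] sqs_diff by simp

lemma nrm_eq0: "sqs f \<Longrightarrow> (\<And>d. d > 0 \<Longrightarrow> nrm f \<le> d) \<Longrightarrow> f = 0"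
proof -
  assume s: "sqs f" and d: "\<And>d. d > 0 \<Longrightarrow> nrm f \<le> d"
  have "nrm f \<le> 0"
  proof (rule ccontr)
    assume "\<not> nrm f \<le> 0"
    then show False using d[of "nrm f / 2"] by simp
  qed
  then have "nsq f = 0" using nsq_nonneg[of f] by (simp add: nrm_def)
  then show "f = 0" by (rule nsq_eq0[OF s])
qed

lemma nrm_sum: "finite J \<Longrightarrow> (\<And>j. j \<in> J \<Longrightarrow> sqs (F j)) \<Longrightarrow> nrm (\<Sum>j\<in>J. F j) \<le> (\<Sum>j\<in>J. nrm (F j)) \<and> sqs (\<Sum>j\<in>J. F j)"
proof (induction J rule: finite_induct)
  case empty then show ?case by (simp add: nrm_def nsq_def sqs_def)
next
  case (insert a J)
  then have IH: "nrm (\<Sum>j\<in>J. F j) \<le> (\<Sum>j\<in>J. nrm (F j))" "sqs (\<Sum>j\<in>J. F j)" by auto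
  have "nrm (F a + (\<Sum>j\<in>J. F j)) \<le> nrm (F a) + nrm (\<Sum>j\<in>J. F j)"
    using insert IH by (intro nrm_triangle) auto
  then have 1: "nrm (F a + sum F J) \<le> nrm (F a) + (\<Sum>j\<in>J. nrm (F j))" using IH by linarith
  have 2: "sqs (F a + sum F J)" using insert IH by (intro sqs_add) auto
  show ?case unfolding sum.insert[OF insert(1,2)] using 1 2 by blast
qed

lemma complete_l2:
  fixes m n :: nat and F :: "nat \<Rightarrow> word \<Rightarrow> complex"
  assumes FL: "\<And>k. F k \<in> l2 m n"
    and C: "\<And>e. e > 0 \<Longrightarrow> \<exists>K. \<forall>k\<ge>K. \<forall>l\<ge>K. nsq (F l - F k) \<le> e"
  shows "\<exists>g \<in> l2 m n. \<forall>e>0. \<exists>K. \<forall>k\<ge>K. nsq (g - F k) \<le> e"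
proof -
  have sq: "sqs (F l - F k)" for l k using FL by (intro sqs_diff) (auto simp: l2_def sqs_def)
  have pt: "(cmod (F l w - F k w))\<^sup>2 \<le> nsq (F l - F k)" for l k w
  proof -
    have "sum (\<lambda>w. (cmod ((F l - F k) w))\<^sup>2) {w} \<le> nsq (F l - F k)"
      unfolding nsq_def by (rule finite_sum_le_infsum) (use sq in \<open>auto simp: sqs_def\<close>)
    then show ?thesis by simp
  qed
  have cau: "Cauchy (\<lambda>k. F k w)" for w
  proof (rule metric_CauchyI)
    fix e :: real assume e: "e > 0"
    obtain K where K: "\<forall>k\<ge>K. \<forall>l\<ge>K. nsq (F l - F k) \<le> e\<^sup>2 / 2" using C[of "e\<^sup>2/2"] e by auto
    show "\<exists>M. \<forall>i\<ge>M. \<forall>j\<ge>M. dist (F i w) (F j w) < e"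
    proof (intro exI allI impI)
      fix i j assume "i \<ge> K" "j \<ge> K"
      then have "(cmod (F i w - F j w))\<^sup>2 \<le> e\<^sup>2 / 2" using K pt[where l=i and k=j and w=w] by force
      also have "\<dots> < e\<^sup>2" using e by simp
      finally show "dist (F i w) (F j w) < e" using e by (simp add: dist_norm power_less_imp_less_base)
    qed
  qed
  define g where "g w = lim (\<lambda>k. F k w)" for w
  have lim: "(\<lambda>k. F k w) \<longlonglongrightarrow> g w" for w
    unfolding g_def using Cauchy_convergent[OF cau] by (simp add: convergent_LIMSEQ_iff)
  have gz: "\<not> reduced m n w \<Longrightarrow> g w = 0" for w
    using lim[of w] FL by (simp add: l2_def LIMSEQ_const_iff)
  have main: "(\<lambda>w. (cmod ((g - F k) w))\<^sup>2) summable_on UNIV \<and> nsq (g - F k) \<le> e"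
    if K: "\<forall>k\<ge>K. \<forall>l\<ge>K. nsq (F l - F k) \<le> e" and k: "k \<ge> K" for e K k
  proof -
    have fin: "sum (\<lambda>w. (cmod (g w - F k w))\<^sup>2) S \<le> e" if "finite S" for S
    proof -
      have t: "(\<lambda>l. sum (\<lambda>w. (cmod (F l w - F k w))\<^sup>2) S) \<longlonglongrightarrow> sum (\<lambda>w. (cmod (g w - F k w))\<^sup>2) S"
        by (intro tendsto_intros lim)
      have ev: "\<forall>\<^sub>F l in sequentially. sum (\<lambda>w. (cmod (F l w - F k w))\<^sup>2) S \<le> e"
      proof (rule eventually_sequentiallyI[of K])
        fix l assume "l \<ge> K"
        have "sum (\<lambda>w. (cmod ((F l - F k) w))\<^sup>2) S \<le> nsq (F l - F k)"
          unfolding nsq_def by (rule finite_sum_le_infsum) (use sq that in \<open>auto simp: sqs_def\<close>)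
        then show "sum (\<lambda>w. (cmod (F l w - F k w))\<^sup>2) S \<le> e" using K k \<open>l \<ge> K\<close> by force
      qed
      show ?thesis using tendsto_upperbound[OF t ev] by simp
    qed
    have s: "(\<lambda>w. (cmod ((g - F k) w))\<^sup>2) summable_on UNIV"
    proof (rule nonneg_bdd_above_summable_on)
      show "bdd_above (sum (\<lambda>w. (cmod ((g - F k) w))\<^sup>2) ` {F. F \<subseteq> UNIV \<and> finite F})"
        by (rule bdd_aboveI2[where M=e]) (simp add: fin)
    qed simp
    moreover have "nsq (g - F k) \<le> e"
      unfolding nsq_def by (rule infsum_le_finite_sums[OF s]) (simp add: fin)
    ultimately show ?thesis by simp
  qed
  obtain K1 where K1: "\<forall>k\<ge>K1. \<forall>l\<ge>K1. nsq (F l - F k) \<le> 1" using C[of 1] by auto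
  have "sqs (g - F K1)" using main[OF K1, of K1] by (simp add: sqs_def)
  then have "sqs ((g - F K1) + F K1)" using FL[of K1] by (intro sqs_add) (auto simp: l2_def sqs_def)
  then have gL: "g \<in> l2 m n" using gz by (simp add: l2_def sqs_def)
  show ?thesis
  proof (intro bexI[OF _ gL] allI impI)
    fix e :: real assume "e > 0"
    then obtain K where K: "\<forall>k\<ge>K. \<forall>l\<ge>K. nsq (F l - F k) \<le> e" using C by blast
    then show "\<exists>K. \<forall>k\<ge>K. nsq (g - F k) \<le> e" using main by blast
  qed
qed

lemma pow_small:
  fixes \<rho> E d :: real
  assumes "0 \<le> \<rho>" "\<rho> < 1" "E \<ge> 0" "d > 0"
  shows "\<exists>K. \<forall>k\<ge>K. \<rho> ^ k * E \<le> d"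
proof -
  obtain K where K: "\<rho> ^ K < d / (E + 1)" using real_arch_pow_inv[of "d / (E + 1)" \<rho>] assms by auto
  show ?thesis
  proof (intro exI allI impI)
    fix k assume "k \<ge> K"
    then have "\<rho> ^ k \<le> \<rho> ^ K" using assms by (intro power_decreasing) auto
    then have "\<rho> ^ k * E \<le> \<rho> ^ K * (E + 1)" using assms by (intro mult_mono) auto
    also have "\<dots> < d" using K assms by (simp add: field_simps)
    finally show "\<rho> ^ k * E \<le> d" by simp
  qed
qed

lemma geo_bound:
  fixes \<rho> :: real
  assumes "0 \<le> \<rho>" "\<rho> < 1" "k \<le> l"
  shows "(\<Sum>j\<in>{k..<l}. \<rho> ^ j) \<le> \<rho> ^ k / (1 - \<rho>)"
proof -
  have "(1 - \<rho>) * (\<Sum>j\<in>{k..<l}. \<rho> ^ j) = \<rho> ^ k - \<rho> ^ l"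
    using assms(3)
  proof (induction l rule: dec_induct)
    case base then show ?case by simp
  next
    case (step l)
    have "(\<Sum>j\<in>{k..<Suc l}. \<rho> ^ j) = (\<Sum>j\<in>{k..<l}. \<rho> ^ j) + \<rho> ^ l" using step(1) by simp
    then have "(1 - \<rho>) * (\<Sum>j\<in>{k..<Suc l}. \<rho> ^ j) = (1 - \<rho>) * (\<Sum>j\<in>{k..<l}. \<rho> ^ j) + (1 - \<rho>) * \<rho> ^ l"
      by (simp add: distrib_left)
    also have "\<dots> = \<rho> ^ k - \<rho> ^ Suc l" using step(3) by (simp add: algebra_simps)
    finally show ?case .
  qed
  then have "(1 - \<rho>) * (\<Sum>j\<in>{k..<l}. \<rho> ^ j) \<le> \<rho> ^ k" using assms by simp
  then show ?thesis using assms by (simp add: field_simps)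
qed

lemma nrm_le_of_nsq: "nsq a \<le> c * nsq b \<Longrightarrow> c \<ge> 0 \<Longrightarrow> nrm a \<le> sqrt c * nrm b"
  unfolding nrm_def by (metis real_sqrt_le_mono real_sqrt_mult)

context fp
begin

abbreviation "p \<equiv> avg m n False"
abbreviation "q \<equiv> avg m n True"

definition "c0 = (2 * real m + 1) * (2 * real n + 1) / (6 * real m * real n)"

lemma c0_pos: "c0 > 0" using m2 n3 by (simp add: c0_def)

lemma c0_lt1: "c0 < 1"
proof -
  have "(2 * real m + 1) * (2 * real n + 1) < 6 * real m * real n"
  proof -
    have a: "real m - 1 \<ge> 1" "real n - 1 \<ge> 2" using m2 n3 by auto
    have "(real m - 1) * (real n - 1) \<ge> 1 * 2" by (rule mult_mono) (use a in auto)
    then show ?thesis by (simp add: algebra_simps)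
  qed
  then show ?thesis using m2 n3 by (simp add: c0_def)
qed

lemma nrm_avg: "f \<in> L \<Longrightarrow> nrm (avg m n b f) \<le> nrm f"
  unfolding nrm_def by (rule real_sqrt_le_mono[OF avg_L(2)])

lemma c0_F: "(2 * N False + 1) * (2 * N (\<not>False) + 1) / (6 * N False * N (\<not>False)) = c0"
  by (simp add: c0_def ord_of_def algebra_simps)

lemma c0_T: "(2 * N True + 1) * (2 * N (\<not>True) + 1) / (6 * N True * N (\<not>True)) = c0"
  by (simp add: c0_def ord_of_def algebra_simps)

lemma key_p: "y \<in> L \<Longrightarrow> (\<And>x j. red x \<Longrightarrow> y (T True j x) = y x) \<Longrightarrow> nrm (p y) \<le> sqrt c0 * nrm y"
  using key[of y False, unfolded c0_F] c0_pos by (intro nrm_le_of_nsq) auto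

lemma key_q: "y \<in> L \<Longrightarrow> (\<And>x j. red x \<Longrightarrow> y (T False j x) = y x) \<Longrightarrow> nrm (q y) \<le> sqrt c0 * nrm y"
  using key[of y True, unfolded c0_T] c0_pos by (intro nrm_le_of_nsq) auto

lemma pqp: assumes "f \<in> L" shows "nrm (p (q (p f))) \<le> c0 * nrm (p f)"
proof -
  have pf: "p f \<in> L" using avg_L(1)[OF assms] .
  have qpf: "q (p f) \<in> L" using avg_L(1)[OF pf] .
  have "nrm (p (q (p f))) \<le> sqrt c0 * nrm (q (p f))" by (rule key_p[OF qpf avg_inv])
  also have "\<dots> \<le> sqrt c0 * (sqrt c0 * nrm (p f))"
  proof (rule mult_left_mono)
    show "nrm (q (p f)) \<le> sqrt c0 * nrm (p f)" by (rule key_q[OF pf]) (rule avg_inv)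
    show "0 \<le> sqrt c0" using c0_pos by simp
  qed
  also have "\<dots> = c0 * nrm (p f)" using c0_pos by (simp add: mult.assoc[symmetric])
  finally show ?thesis .
qed

lemma avg_sum: "finite J \<Longrightarrow> avg m n b (\<Sum>j\<in>J. F j) = (\<Sum>j\<in>J. avg m n b (F j))"
proof (induction J rule: finite_induct)
  case empty show ?case unfolding sum.empty by (rule avg_zero)
next
  case (insert a J)
  show ?case unfolding sum.insert[OF insert(1,2)] avg_add insert(3) ..
qed

lemma L_sum: "finite J \<Longrightarrow> (\<And>j. j \<in> J \<Longrightarrow> F j \<in> L) \<Longrightarrow> (\<Sum>j\<in>J. F j) \<in> L"
proof (induction J rule: finite_induct)
  case empty show ?case unfolding sum.empty by (rule L_zero)
next
  case (insert a J)
  show ?case unfolding sum.insert[OF insert(1,2)] using insert by (intro L_add) auto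
qed

lemma core:
  assumes zL: "z \<in> L"
  shows "\<exists>a x y. a \<in> L \<and> p a = 0 \<and> q a = 0 \<and> x \<in> p ` L \<and> y \<in> q ` L \<and> z = a + x + y"
proof -
  define r where "r = rec_nat (z - q z) (\<lambda>_ r. r - p r + q (p r))"
  have r0: "r 0 = z - q z" by (simp add: r_def)
  have rS: "r (Suc k) = r k - p (r k) + q (p (r k))" for k by (simp add: r_def)
  have rL: "r k \<in> L" for k
  proof (induction k)
    case 0 show ?case unfolding r0 using zL by (intro L_diff avg_L(1))
  next
    case (Suc k) show ?case unfolding rS using Suc by (intro L_diff L_add avg_L(1))
  qed
  have pr: "p (r (Suc k)) = p (q (p (r k)))" for k
    using avg_idem[OF rL[of k], of False] by (simp add: rS avg_add avg_diff)
  define B where "B = nrm (p (r 0))"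
  have B0: "B \<ge> 0" by (simp add: B_def nrm_nonneg)
  have bnd: "nrm (p (r k)) \<le> c0 ^ k * B" for k
  proof (induction k)
    case 0 then show ?case by (simp add: B_def)
  next
    case (Suc k)
    have "nrm (p (r (Suc k))) \<le> c0 * nrm (p (r k))" unfolding pr by (rule pqp[OF rL])
    also have "\<dots> \<le> c0 * (c0 ^ k * B)" by (rule mult_left_mono[OF Suc]) (use c0_pos in simp)
    finally show ?case by simp
  qed
  define X where "X k = (\<Sum>j<k. p (r j))" for k
  have XS: "X (Suc k) = X k + p (r k)" for k by (simp add: X_def)
  have XL: "X k \<in> L" for k unfolding X_def by (rule L_sum) (auto intro: avg_L(1) rL)
  have pXL: "p (r k) \<in> L" for k by (rule avg_L(1)[OF rL])
  have Xd: "nrm (X l - X k) \<le> (\<Sum>j\<in>{k..<l}. c0 ^ j * B)" if "k \<le> l" for k l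
    using that
  proof (induction l rule: dec_induct)
    case base then show ?case by (simp add: nrm_def nsq_def)
  next
    case (step l)
    have eq: "X (Suc l) - X k = (X l - X k) + p (r l)" by (simp add: XS algebra_simps)
    have "nrm ((X l - X k) + p (r l)) \<le> nrm (X l - X k) + nrm (p (r l))"
      by (rule nrm_triangle) (use XL pXL in \<open>auto intro: L_sqs L_diff\<close>)
    then have "nrm (X (Suc l) - X k) \<le> nrm (X l - X k) + nrm (p (r l))" unfolding eq .
    also have "\<dots> \<le> (\<Sum>j\<in>{k..<l}. c0 ^ j * B) + c0 ^ l * B" by (rule add_mono[OF step.IH bnd[of l]])
    also have "\<dots> = (\<Sum>j\<in>{k..<Suc l}. c0 ^ j * B)" using step(1) by simp
    finally show ?case .
  qed
  define E where "E = B / (1 - c0)"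
  have E0: "E \<ge> 0" using B0 c0_lt1 by (simp add: E_def)
  have Xd2: "nrm (X l - X k) \<le> c0 ^ k * E" if "k \<le> l" for k l
  proof -
    have "(\<Sum>j\<in>{k..<l}. c0 ^ j * B) = (\<Sum>j\<in>{k..<l}. c0 ^ j) * B" by (simp add: sum_distrib_right)
    also have "\<dots> \<le> c0 ^ k / (1 - c0) * B"
      by (rule mult_right_mono[OF geo_bound[OF _ c0_lt1 that] B0]) (use c0_pos in simp)
    finally show ?thesis using Xd[OF that] by (simp add: E_def)
  qed
  have Xd3: "nrm (X l - X k) \<le> c0 ^ K * E" if "k \<ge> K" "l \<ge> K" for k l K
  proof -
    have mono: "c0 ^ j * E \<le> c0 ^ K * E" if "j \<ge> K" for j
      by (rule mult_right_mono[OF power_decreasing[OF that] E0]) (use c0_pos c0_lt1 in auto)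
    show ?thesis
    proof (cases "k \<le> l")
      case True then show ?thesis using Xd2[OF True] mono[OF \<open>k \<ge> K\<close>] by simp
    next
      case False
      then have "nrm (X k - X l) \<le> c0 ^ l * E" using Xd2[of l k] by simp
      then show ?thesis using mono[OF \<open>l \<ge> K\<close>] nrm_diff_sym[of "X l" "X k"] by simp
    qed
  qed
  have cauchy: "\<exists>K. \<forall>k\<ge>K. \<forall>l\<ge>K. nsq (X l - X k) \<le> e" if epos: "e > 0" for e
  proof -
    obtain K where K: "\<forall>k\<ge>K. c0 ^ k * E \<le> sqrt e"
      using pow_small[of c0 E "sqrt e"] c0_pos c0_lt1 E0 epos by auto
    show ?thesis
    proof (intro exI allI impI)
      fix k l assume "k \<ge> K" "l \<ge> K"
      then have "nrm (X l - X k) \<le> sqrt e" using Xd3[of K k l] K by force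
      then show "nsq (X l - X k) \<le> e" unfolding nrm_def using epos nsq_nonneg
        by (simp add: real_sqrt_le_iff)
    qed
  qed
  obtain x where xL: "x \<in> L" and xlim: "\<And>e. e > 0 \<Longrightarrow> \<exists>K. \<forall>k\<ge>K. nsq (x - X k) \<le> e"
    using complete_l2[of X m n, OF XL cauchy] by blast
  have xlim2: "\<exists>K. \<forall>k\<ge>K. nrm (x - X k) \<le> d" if dpos: "d > 0" for d
  proof -
    obtain K where K: "\<forall>k\<ge>K. nsq (x - X k) \<le> d\<^sup>2" using xlim[of "d\<^sup>2"] dpos by auto
    show ?thesis
    proof (intro exI allI impI)
      fix k assume "k \<ge> K"
      then have h: "nsq (x - X k) \<le> d\<^sup>2" using K by auto
      show "nrm (x - X k) \<le> d" unfolding nrm_def using real_sqrt_le_mono[OF h] dpos by simp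
    qed
  qed
  have pX: "p (X k) = X k" for k
    unfolding X_def by (simp add: avg_sum avg_idem[OF rL])
  have px: "p x = x"
  proof -
    have "x - p x = 0"
    proof (rule nrm_eq0)
      show "sqs (x - p x)" using xL avg_L(1)[OF xL] by (simp add: L_sqs L_diff)
      fix d :: real assume d: "d > 0"
      obtain K where K: "\<forall>k\<ge>K. nrm (x - X K) \<le> d / 2" using xlim2[of "d/2"] d by auto
      have e1: "nrm (x - p x) \<le> nrm (x - X K) + nrm (X K - p x)"
        using nrm_diff_tri[of x "X K" "p x"] xL XL avg_L(1)[OF xL] by (simp add: L_sqs)
      have e2: "X K - p x = p (X K - x)" by (simp add: avg_diff pX)
      have e3: "nrm (p (X K - x)) \<le> nrm (X K - x)" by (rule nrm_avg) (simp add: L_diff XL xL)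
      have e4: "nrm (X K - x) = nrm (x - X K)" by (rule nrm_diff_sym)
      have e5: "nrm (X K - p x) \<le> nrm (x - X K)" unfolding e2 using e3 e4 by linarith
      show "nrm (x - p x) \<le> d" using e1 e5 K by force
    qed
    then show ?thesis by simp
  qed
  have rX: "r k = z - q z - X k + q (X k)" for k
  proof (induction k)
    case 0
    have X0: "X 0 = 0" by (simp add: X_def)
    show ?case unfolding r0 X0 avg_zero by (simp only: diff_zero add_0_right)
  next
    case (Suc k)
    define P where "P = p (r k)"
    have 1: "r (Suc k) = r k - P + q P" unfolding P_def by (rule rS)
    have 2: "X (Suc k) = X k + P" unfolding P_def by (rule XS)
    show ?case unfolding 1 2 avg_add Suc by (simp add: algebra_simps)
  qed
  define a where "a = z - x - q (z - x)"
  define y where "y = q (z - x)"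
  have aL: "a \<in> L" unfolding a_def using zL xL by (intro L_diff avg_L(1)) auto
  have qa: "q a = 0" unfolding a_def using avg_idem[of "z - x" True] zL xL
    by (simp add: avg_diff L_diff)
  have pa: "p a = 0"
  proof (rule nrm_eq0)
    show "sqs (p a)" using avg_L(1)[OF aL] by (simp add: L_sqs)
    fix d :: real assume d: "d > 0"
    obtain K1 where K1: "\<forall>k\<ge>K1. nrm (x - X k) \<le> d / 4" using xlim2[of "d/4"] d by auto
    obtain K2 where K2: "\<forall>k\<ge>K2. c0 ^ k * B \<le> d / 2"
      using pow_small[of c0 B "d/2"] c0_pos c0_lt1 B0 d by auto
    define k where "k = max K1 K2"
    have k1: "nrm (x - X k) \<le> d / 4" using K1 by (simp add: k_def)
    have k2: "c0 ^ k * B \<le> d / 2" using K2 by (simp add: k_def)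
    have ar: "a - r k = (X k - x) - q (X k - x)" unfolding a_def rX by (simp add: avg_diff algebra_simps)
    have XxL: "X k - x \<in> L" using XL xL by (rule L_diff)
    have f0: "p a = p (a - r k) + p (r k)" by (simp add: avg_diff)
    have f1: "nrm (p (a - r k) + p (r k)) \<le> nrm (p (a - r k)) + nrm (p (r k))"
      by (rule nrm_triangle) (use aL rL avg_L(1) in \<open>auto simp: L_sqs L_diff\<close>)
    have f2: "nrm (p (a - r k)) \<le> nrm (a - r k)" by (rule nrm_avg) (simp add: L_diff aL rL)
    have f3: "nrm ((X k - x) + - q (X k - x)) \<le> nrm (X k - x) + nrm (- q (X k - x))"
      by (rule nrm_triangle) (use XxL avg_L(1)[OF XxL] in \<open>auto simp: L_sqs L_uminus\<close>)
    have f3': "nrm (a - r k) \<le> nrm (X k - x) + nrm (q (X k - x))"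
      using f3 unfolding ar nrm_uminus by simp
    have f4: "nrm (q (X k - x)) \<le> nrm (X k - x)" by (rule nrm_avg[OF XxL])
    have f5: "nrm (X k - x) = nrm (x - X k)" by (rule nrm_diff_sym)
    have f6: "nrm (p a) \<le> nrm (p (a - r k)) + nrm (p (r k))" unfolding f0 by (rule f1)
    show "nrm (p a) \<le> d" using f6 f2 f3' f4 f5 k1 k2 bnd[of k] by linarith
  qed
  have "x \<in> p ` L" using px xL by (metis image_eqI)
  moreover have "y \<in> q ` L" unfolding y_def using zL xL by (intro imageI L_diff)
  moreover have "z = a + x + y" by (simp add: a_def y_def)
  ultimately show ?thesis using aL pa qa by blast
qed

end

lemma l2_inner_ip: "l2_inner = ip" by (intro ext) (simp add: l2_inner_def ip_def)

lemma ip_zero_left[simp]: "ip 0 g = 0" by (simp add: ip_def)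
lemma ip_zero_right[simp]: "ip f 0 = 0" by (simp add: ip_def)

context fp
begin

abbreviation "sip \<equiv> l2sum_inner"

lemma sip_eq: "sip u v = ip (fst u) (fst v) + ip (snd u) (snd v)"
  by (simp add: l2sum_inner_def l2_inner_ip)

lemma sip_add_right:
  assumes "u \<in> L \<times> L" "v \<in> L \<times> L" "w \<in> L \<times> L"
  shows "sip u (v + w) = sip u v + sip u w"
  using assms by (simp add: sip_eq ip_add_right L_sqs mem_Times_iff)

lemma sip_cnj: "sip v u = cnj (sip u v)"
  by (simp add: sip_eq ip_cnj[of "fst v"] ip_cnj[of "snd v"])

lemma sip_zero_right: "sip u 0 = 0" by (simp add: sip_eq)

lemma sip_self0:
  assumes "u \<in> L \<times> L" "sip u u = 0"
  shows "u = 0"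
proof -
  have s: "sqs (fst u)" "sqs (snd u)" using assms(1) by (auto simp: L_sqs mem_Times_iff)
  have "complex_of_real (nsq (fst u) + nsq (snd u)) = 0"
    using assms(2) by (simp add: sip_eq ip_self[OF s(1)] ip_self[OF s(2)])
  then have "nsq (fst u) + nsq (snd u) = 0" by (simp only: of_real_eq_0_iff)
  then have "nsq (fst u) = 0" "nsq (snd u) = 0" using nsq_nonneg[of "fst u"] nsq_nonneg[of "snd u"] by linarith+
  then have "fst u = 0" "snd u = 0" using nsq_eq0 s by auto
  then show ?thesis by (simp add: prod_eq_iff)
qed

lemma dsum_intro:
  assumes sub: "A \<subseteq> L \<times> L" "B \<subseteq> L \<times> L" "C \<subseteq> L \<times> L"
    and oAB: "\<forall>a\<in>A. \<forall>b\<in>B. sip a b = 0"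
    and oAC: "\<forall>a\<in>A. \<forall>c\<in>C. sip a c = 0"
    and oBC: "\<forall>b\<in>B. \<forall>c\<in>C. sip b c = 0"
    and dA: "\<And>a a'. a \<in> A \<Longrightarrow> a' \<in> A \<Longrightarrow> a - a' \<in> A"
    and dB: "\<And>a a'. a \<in> B \<Longrightarrow> a' \<in> B \<Longrightarrow> a - a' \<in> B"
    and dC: "\<And>a a'. a \<in> C \<Longrightarrow> a' \<in> C \<Longrightarrow> a - a' \<in> C"
    and ex: "\<And>v. v \<in> L \<times> L \<Longrightarrow> \<exists>a\<in>A. \<exists>b\<in>B. \<exists>c\<in>C. v = a + b + c"
  shows "orth_dsum3 (L \<times> L) A B C"
proof -
  have uniq: "\<exists>!abc. fst abc \<in> A \<and> fst (snd abc) \<in> B \<and> snd (snd abc) \<in> C \<and> v = fst abc + fst (snd abc) + snd (snd abc)"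
    if v: "v \<in> L \<times> L" for v
  proof -
  obtain a b c where abc: "a \<in> A" "b \<in> B" "c \<in> C" "v = a + b + c" using ex[OF v] by blast
  show "\<exists>!abc. fst abc \<in> A \<and> fst (snd abc) \<in> B \<and> snd (snd abc) \<in> C \<and> v = fst abc + fst (snd abc) + snd (snd abc)"
  proof (rule ex1I[where a="(a, b, c)"])
    show "fst (a, b, c) \<in> A \<and> fst (snd (a, b, c)) \<in> B \<and> snd (snd (a, b, c)) \<in> C \<and> v = fst (a, b, c) + fst (snd (a, b, c)) + snd (snd (a, b, c))"
      using abc by simp
  next
    fix t assume t: "fst t \<in> A \<and> fst (snd t) \<in> B \<and> snd (snd t) \<in> C \<and> v = fst t + fst (snd t) + snd (snd t)"
    define d1 where "d1 = a - fst t"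
    define d2 where "d2 = b - fst (snd t)"
    define d3 where "d3 = c - snd (snd t)"
    have t1: "fst t \<in> A" "fst (snd t) \<in> B" "snd (snd t) \<in> C" using t by simp_all
    have d1A: "d1 \<in> A" unfolding d1_def by (rule dA[OF abc(1) t1(1)])
    have d2B: "d2 \<in> B" unfolding d2_def by (rule dB[OF abc(2) t1(2)])
    have d3C: "d3 \<in> C" unfolding d3_def by (rule dC[OF abc(3) t1(3)])
    have dL: "d1 \<in> L \<times> L" "d2 \<in> L \<times> L" "d3 \<in> L \<times> L" using d1A d2B d3C sub by auto
    have sum0: "d1 + d2 + d3 = 0" unfolding d1_def d2_def d3_def using abc(4) t
      by (simp add: algebra_simps)
    have L2: "d1 + d2 \<in> L \<times> L" using dL by (auto simp: mem_Times_iff L_add)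
    have expand: "sip u (d1 + d2 + d3) = sip u d1 + sip u d2 + sip u d3" if "u \<in> L \<times> L" for u
      using sip_add_right[OF that L2 dL(3)] sip_add_right[OF that dL(1,2)] by simp
    have "sip d1 d1 = 0" using expand[OF dL(1)] oAB d1A d2B oAC d3C by (simp add: sum0 sip_zero_right)
    then have z1: "d1 = 0" by (rule sip_self0[OF dL(1)])
    have "sip d2 d2 = 0"
    proof -
      have "sip d2 (d1 + d2 + d3) = sip d2 d1 + sip d2 d2 + sip d2 d3" by (rule expand[OF dL(2)])
      moreover have "sip d2 (d1 + d2 + d3) = 0" unfolding sum0 by (rule sip_zero_right)
      moreover have "sip d2 d3 = 0" using oBC d2B d3C by blast
      moreover have "sip d2 d1 = 0" using sip_cnj[of d2 d1] oAB d1A d2B by simp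
      ultimately show ?thesis by simp
    qed
    then have z2: "d2 = 0" by (rule sip_self0[OF dL(2)])
    have z3: "d3 = 0" using sum0 z1 z2 by simp
    show "t = (a, b, c)" using z1 z2 z3 unfolding d1_def d2_def d3_def by (simp add: prod_eq_iff)
  qed
  qed
  show ?thesis unfolding orth_dsum3_def
    apply (intro conjI sub oAB oAC oBC ballI)
    by (erule uniq)
qed

lemma orth_p: "a \<in> L \<Longrightarrow> avg m n b a = 0 \<Longrightarrow> w \<in> L \<Longrightarrow> ip a (avg m n b w) = 0"
  using avg_adj[of a w b] by simp

lemma orth_p': "a \<in> L \<Longrightarrow> avg m n b a = 0 \<Longrightarrow> w \<in> L \<Longrightarrow> ip (avg m n b w) a = 0"
  using orth_p[of a b w] ip_cnj[of "avg m n b w" a] by simp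

lemma S1_iff: "a \<in> (\<lambda>u. u - p u) ` L \<inter> (\<lambda>u. u - q u) ` L \<longleftrightarrow> a \<in> L \<and> p a = 0 \<and> q a = 0"
proof
  assume "a \<in> (\<lambda>u. u - p u) ` L \<inter> (\<lambda>u. u - q u) ` L"
  then obtain u v where u: "u \<in> L" "a = u - p u" and v: "v \<in> L" "a = v - q v" by blast
  have "a \<in> L" using u by (simp add: L_diff avg_L(1))
  moreover have "p a = 0" using u avg_idem[OF u(1), of False] by (simp add: avg_diff)
  moreover have "q a = 0" using v avg_idem[OF v(1), of True] by (simp add: avg_diff)
  ultimately show "a \<in> L \<and> p a = 0 \<and> q a = 0" by simp
next
  assume a: "a \<in> L \<and> p a = 0 \<and> q a = 0"
  then have "a = a - p a" "a = a - q a" by simp_all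
  then show "a \<in> (\<lambda>u. u - p u) ` L \<inter> (\<lambda>u. u - q u) ` L" using a by blast
qed

lemma imgp: "x \<in> avg m n b ` L \<Longrightarrow> x \<in> L \<and> avg m n b x = x"
  using avg_L(1) avg_idem by blast

end

context fp
begin

lemma H2_mem: "c \<in> {x + y | x y. x \<in> p ` L \<and> y \<in> q ` L} \<Longrightarrow> c \<in> L \<and> (\<forall>a. a \<in> L \<and> p a = 0 \<and> q a = 0 \<longrightarrow> ip a c = 0)"
proof -
  assume "c \<in> {x + y | x y. x \<in> p ` L \<and> y \<in> q ` L}"
  then obtain w v where wv: "w \<in> L" "v \<in> L" "c = p w + q v" by blast
  have cL: "c \<in> L" using wv by (simp add: L_add avg_L(1))
  show ?thesis
  proof (intro conjI allI impI cL)
    fix a assume a: "a \<in> L \<and> p a = 0 \<and> q a = 0"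
    have "ip a c = ip a (p w) + ip a (q v)" unfolding wv(3)
      using a wv by (intro ip_add_right) (auto intro: L_sqs avg_L(1))
    also have "\<dots> = 0" using a wv orth_p[of a False w] orth_p[of a True v] by simp
    finally show "ip a c = 0" .
  qed
qed

lemma part1:
  "orth_dsum3 (L \<times> L)
     {(a, - a) | a. a \<in> (\<lambda>u. u - p u) ` L \<inter> (\<lambda>u. u - q u) ` L}
     {(c, - c) | c. c \<in> {x + y | x y. x \<in> p ` L \<and> y \<in> q ` L}}
     {(b, b) | b. b \<in> L}"
  (is "orth_dsum3 _ ?A ?B ?C")
proof (rule dsum_intro)
  have A: "v \<in> ?A \<longleftrightarrow> (\<exists>a. v = (a, - a) \<and> a \<in> L \<and> p a = 0 \<and> q a = 0)" for v
    using S1_iff by blast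
  have B: "v \<in> ?B \<longleftrightarrow> (\<exists>c. v = (c, - c) \<and> c \<in> {x + y | x y. x \<in> p ` L \<and> y \<in> q ` L})" for v
    by blast
  have C: "v \<in> ?C \<longleftrightarrow> (\<exists>b. v = (b, b) \<and> b \<in> L)" for v by blast
  show "?A \<subseteq> L \<times> L" using A L_uminus by auto
  show "?B \<subseteq> L \<times> L"
  proof
    fix v assume "v \<in> ?B"
    then obtain c where c: "v = (c, - c)" "c \<in> {x + y | x y. x \<in> p ` L \<and> y \<in> q ` L}" by blast
    have "c \<in> L" using H2_mem[OF c(2)] by blast
    then show "v \<in> L \<times> L" using c(1) L_uminus by simp
  qed
  show "?C \<subseteq> L \<times> L"
  proof
    fix v assume "v \<in> ?C"
    then obtain b where "v = (b, b)" "b \<in> L" by blast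
    then show "v \<in> L \<times> L" by simp
  qed
  show "\<forall>a\<in>?A. \<forall>b\<in>?B. sip a b = 0"
  proof (intro ballI)
    fix u v assume "u \<in> ?A" "v \<in> ?B"
    then obtain a c where a: "u = (a, - a)" "a \<in> L" "p a = 0" "q a = 0"
      and c: "v = (c, - c)" "c \<in> {x + y | x y. x \<in> p ` L \<and> y \<in> q ` L}" using A B by blast
    have "ip a c = 0" using H2_mem[OF c(2)] a by blast
    then show "sip u v = 0" using a c by (simp add: sip_eq ip_uminus_left ip_uminus_right)
  qed
  show "\<forall>a\<in>?A. \<forall>b\<in>?C. sip a b = 0"
  proof (intro ballI)
    fix u v assume "u \<in> ?A" "v \<in> ?C"
    then obtain a b where a: "u = (a, - a)" and b: "v = (b, b)" using A C by blast
    show "sip u v = 0" using a b by (simp add: sip_eq ip_uminus_left)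
  qed
  show "\<forall>a\<in>?B. \<forall>b\<in>?C. sip a b = 0"
  proof (intro ballI)
    fix u v assume "u \<in> ?B" "v \<in> ?C"
    then obtain a b where a: "u = (a, - a)" and b: "v = (b, b)" using B C by blast
    show "sip u v = 0" using a b by (simp add: sip_eq ip_uminus_left)
  qed
  show "u - u' \<in> ?A" if h1: "u \<in> ?A" and h2: "u' \<in> ?A" for u u'
  proof -
    obtain a where a: "u = (a, - a)" "a \<in> L" "p a = 0" "q a = 0" using h1 A by blast
    obtain a' where a': "u' = (a', - a')" "a' \<in> L" "p a' = 0" "q a' = 0" using h2 A by blast
    have "u - u' = (a - a', - (a - a'))" using a a' by simp
    moreover have "a - a' \<in> L" "p (a - a') = 0" "q (a - a') = 0" using a a' by (simp_all add: L_diff avg_diff)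
    ultimately show ?thesis using A by blast
  qed
  show "u - u' \<in> ?B" if h1: "u \<in> ?B" and h2: "u' \<in> ?B" for u u'
  proof -
    obtain w v where wv: "w \<in> L" "v \<in> L" "u = (p w + q v, - (p w + q v))" using h1 by blast
    obtain w' v' where wv': "w' \<in> L" "v' \<in> L" "u' = (p w' + q v', - (p w' + q v'))" using h2 by blast
    have e: "p w + q v - (p w' + q v') = p (w - w') + q (v - v')" by (simp add: avg_diff algebra_simps)
    have "u - u' = (p (w - w') + q (v - v'), - (p (w - w') + q (v - v')))"
      using wv wv' e by (simp add: algebra_simps)
    moreover have "w - w' \<in> L" "v - v' \<in> L" using wv wv' by (simp_all add: L_diff)
    ultimately show ?thesis by blast
  qed
  show "u - u' \<in> ?C" if h1: "u \<in> ?C" and h2: "u' \<in> ?C" for u u'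
  proof -
    obtain b b' where "u = (b, b)" "b \<in> L" "u' = (b', b')" "b' \<in> L" using h1 h2 C by blast
    then show ?thesis using L_diff by auto
  qed
  show "\<exists>a\<in>?A. \<exists>b\<in>?B. \<exists>c\<in>?C. v = a + b + c" if v: "v \<in> L \<times> L" for v
  proof -
    obtain U V where UV: "v = (U, V)" "U \<in> L" "V \<in> L" using v by (cases v) auto
    define D where "D = (\<lambda>w. (1/2) * (U - V) w)"
    define Bv where "Bv = (\<lambda>w. (1/2) * (U + V) w)"
    have DL: "D \<in> L" unfolding D_def using UV by (intro L_scale L_diff)
    have BL: "Bv \<in> L" unfolding Bv_def using UV by (intro L_scale L_add)
    obtain a x y where axy: "a \<in> L" "p a = 0" "q a = 0" "x \<in> p ` L" "y \<in> q ` L" "D = a + x + y"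
      using core[OF DL] by blast
    have inA: "(a, - a) \<in> ?A" using A axy by blast
    have inB: "(x + y, - (x + y)) \<in> ?B" using axy by blast
    have inC: "(Bv, Bv) \<in> ?C" using BL by blast
    have pw: "D w = a w + x w + y w" for w using axy(6) by simp
    have "v = (a, - a) + (x + y, - (x + y)) + (Bv, Bv)"
    proof -
      have "U = a + (x + y) + Bv"
      proof
        fix w show "U w = (a + (x + y) + Bv) w" using pw[of w] by (simp add: D_def Bv_def field_simps)
      qed
      moreover have "V = - a + - (x + y) + Bv"
      proof
        fix w show "V w = (- a + - (x + y) + Bv) w" using pw[of w] by (simp add: D_def Bv_def field_simps)
      qed
      ultimately show ?thesis using UV by simp
    qed
    then show ?thesis using inA inB inC by blast
  qed
qed

end

context fp
begin

lemma p_kill: "u \<in> L \<Longrightarrow> avg m n b (u - avg m n b u) = 0"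
  using avg_idem[of u b] by (simp add: avg_diff)

lemma part2:
  "orth_dsum3 (L \<times> L)
     {(a, - a) | a. a \<in> (\<lambda>u. u - p u) ` L \<inter> (\<lambda>u. u - q u) ` L}
     {(p w, q v) | v w. v \<in> L \<and> w \<in> L}
     {(u - p u, u - q u) | u. u \<in> L}"
  (is "orth_dsum3 _ ?A ?B ?C")
proof (rule dsum_intro)
  have A: "v \<in> ?A \<longleftrightarrow> (\<exists>a. v = (a, - a) \<and> a \<in> L \<and> p a = 0 \<and> q a = 0)" for v
    using S1_iff by blast
  have B: "v \<in> ?B \<longleftrightarrow> (\<exists>w v'. v = (p w, q v') \<and> w \<in> L \<and> v' \<in> L)" for v by blast
  have C: "v \<in> ?C \<longleftrightarrow> (\<exists>u. v = (u - p u, u - q u) \<and> u \<in> L)" for v by blast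
  show "?A \<subseteq> L \<times> L"
  proof
    fix v assume "v \<in> ?A"
    then obtain a where "v = (a, - a)" "a \<in> L" using A by blast
    then show "v \<in> L \<times> L" using L_uminus by simp
  qed
  show "?B \<subseteq> L \<times> L"
  proof
    fix v assume "v \<in> ?B"
    then obtain w v' where "v = (p w, q v')" "w \<in> L" "v' \<in> L" using B by blast
    then show "v \<in> L \<times> L" using avg_L(1) by simp
  qed
  show "?C \<subseteq> L \<times> L"
  proof
    fix v assume "v \<in> ?C"
    then obtain u where "v = (u - p u, u - q u)" "u \<in> L" using C by blast
    then show "v \<in> L \<times> L" using avg_L(1) L_diff by simp
  qed
  show "\<forall>a\<in>?A. \<forall>b\<in>?B. sip a b = 0"
  proof (intro ballI)
    fix x y assume "x \<in> ?A" "y \<in> ?B"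
    then obtain a w v where a: "x = (a, - a)" "a \<in> L" "p a = 0" "q a = 0"
      and b: "y = (p w, q v)" "w \<in> L" "v \<in> L" using A B by blast
    show "sip x y = 0" using a b orth_p[of a False w] orth_p[of a True v]
      by (simp add: sip_eq ip_uminus_left)
  qed
  show "\<forall>a\<in>?A. \<forall>b\<in>?C. sip a b = 0"
  proof (intro ballI)
    fix x y assume "x \<in> ?A" "y \<in> ?C"
    then obtain a u where a: "x = (a, - a)" "a \<in> L" "p a = 0" "q a = 0"
      and c: "y = (u - p u, u - q u)" "u \<in> L" using A C by blast
    have s: "sqs a" "sqs u" "sqs (p u)" "sqs (q u)" using a c avg_L(1) L_sqs by auto
    have "ip a (u - p u) = ip a u" using ip_diff_right[OF s(1,2,3)] orth_p[of a False u] a c by simp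
    moreover have "ip a (u - q u) = ip a u" using ip_diff_right[OF s(1,2,4)] orth_p[of a True u] a c by simp
    ultimately show "sip x y = 0" using a c by (simp add: sip_eq ip_uminus_left)
  qed
  show "\<forall>a\<in>?B. \<forall>b\<in>?C. sip a b = 0"
  proof (intro ballI)
    fix x y assume "x \<in> ?B" "y \<in> ?C"
    then obtain w v u where b: "x = (p w, q v)" "w \<in> L" "v \<in> L"
      and c: "y = (u - p u, u - q u)" "u \<in> L" using B C by blast
    have uL: "u - p u \<in> L" "u - q u \<in> L" using c avg_L(1) L_diff by auto
    have "ip (p w) (u - p u) = ip w (p (u - p u))" by (rule avg_adj[OF b(2) uL(1)])
    moreover have "ip (q v) (u - q u) = ip v (q (u - q u))" by (rule avg_adj[OF b(3) uL(2)])
    ultimately show "sip x y = 0" using b c p_kill[OF c(2)] by (simp add: sip_eq)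
  qed
  show "x - x' \<in> ?A" if h1: "x \<in> ?A" and h2: "x' \<in> ?A" for x x'
  proof -
    obtain a where a: "x = (a, - a)" "a \<in> L" "p a = 0" "q a = 0" using h1 A by blast
    obtain a' where a': "x' = (a', - a')" "a' \<in> L" "p a' = 0" "q a' = 0" using h2 A by blast
    have "x - x' = (a - a', - (a - a'))" using a a' by simp
    moreover have "a - a' \<in> L" "p (a - a') = 0" "q (a - a') = 0" using a a' by (simp_all add: L_diff avg_diff)
    ultimately show ?thesis using A by blast
  qed
  show "x - x' \<in> ?B" if h1: "x \<in> ?B" and h2: "x' \<in> ?B" for x x'
  proof -
    obtain w v where wv: "x = (p w, q v)" "w \<in> L" "v \<in> L" using h1 B by blast
    obtain w' v' where wv': "x' = (p w', q v')" "w' \<in> L" "v' \<in> L" using h2 B by blast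
    have "x - x' = (p (w - w'), q (v - v'))" using wv wv' by (simp add: avg_diff)
    moreover have "w - w' \<in> L" "v - v' \<in> L" using wv wv' by (simp_all add: L_diff)
    ultimately show ?thesis by blast
  qed
  show "x - x' \<in> ?C" if h1: "x \<in> ?C" and h2: "x' \<in> ?C" for x x'
  proof -
    obtain u where u: "x = (u - p u, u - q u)" "u \<in> L" using h1 C by blast
    obtain u' where u': "x' = (u' - p u', u' - q u')" "u' \<in> L" using h2 C by blast
    have "x - x' = ((u - u') - p (u - u'), (u - u') - q (u - u'))" using u u' by (simp add: avg_diff)
    moreover have "u - u' \<in> L" using u u' by (simp add: L_diff)
    ultimately show ?thesis by blast
  qed
  show "\<exists>a\<in>?A. \<exists>b\<in>?B. \<exists>c\<in>?C. v = a + b + c" if v: "v \<in> L \<times> L" for v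
  proof -
    obtain X Y where XY: "v = (X, Y)" "X \<in> L" "Y \<in> L" using v by (cases v) auto
    define X' where "X' = X - p X"
    define Y' where "Y' = Y - q Y"
    have X'L: "X' \<in> L" unfolding X'_def using XY avg_L(1) L_diff by auto
    have Y'L: "Y' \<in> L" unfolding Y'_def using XY avg_L(1) L_diff by auto
    have pX': "p X' = 0" unfolding X'_def by (rule p_kill[OF XY(2)])
    have qY': "q Y' = 0" unfolding Y'_def by (rule p_kill[OF XY(3)])
    obtain a1 x1 y1 where c1: "a1 \<in> L" "p a1 = 0" "q a1 = 0" "x1 \<in> p ` L" "y1 \<in> q ` L" "X' = a1 + x1 + y1"
      using core[OF X'L] by blast
    obtain a2 x2 y2 where c2: "a2 \<in> L" "p a2 = 0" "q a2 = 0" "x2 \<in> p ` L" "y2 \<in> q ` L" "Y' = a2 + x2 + y2"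
      using core[OF Y'L] by blast
    have x1: "x1 \<in> L" "p x1 = x1" using imgp[OF c1(4)] by auto
    have y1: "y1 \<in> L" "q y1 = y1" using imgp[OF c1(5)] by auto
    have x2: "x2 \<in> L" "p x2 = x2" using imgp[OF c2(4)] by auto
    have y2: "y2 \<in> L" "q y2 = y2" using imgp[OF c2(5)] by auto
    have e1: "x1 = - p y1"
    proof -
      have "0 = p a1 + p x1 + p y1" using pX' c1(6) by (simp add: avg_add)
      then show ?thesis using c1(2) x1(2) by (simp add: eq_neg_iff_add_eq_0 add.commute)
    qed
    have e2: "y2 = - q x2"
    proof -
      have "0 = q a2 + q x2 + q y2" using qY' c2(6) by (simp add: avg_add)
      then show ?thesis using c2(3) y2(2) by (simp add: eq_neg_iff_add_eq_0 add.commute)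
    qed
    define h where "h = (\<lambda>w. (1/2) * (a1 + a2) w)"
    define u where "u = y1 + x2 + h"
    define a where "a = (\<lambda>w. (1/2) * (a1 - a2) w)"
    have hL: "h \<in> L" unfolding h_def using c1 c2 by (intro L_scale L_add)
    have ph: "p h = 0" unfolding h_def avg_scale avg_add c1(2) c2(2) by (simp add: fun_eq_iff)
    have qh: "q h = 0" unfolding h_def avg_scale avg_add c1(3) c2(3) by (simp add: fun_eq_iff)
    have uL: "u \<in> L" unfolding u_def using y1 x2 hL by (intro L_add)
    have pu: "p u = p y1 + x2" unfolding u_def using x2 ph by (simp add: avg_add)
    have qu: "q u = y1 + q x2" unfolding u_def using y1 qh by (simp add: avg_add)
    have aL: "a \<in> L" unfolding a_def using c1 c2 by (intro L_scale L_diff)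
    have pa: "p a = 0" unfolding a_def avg_scale avg_diff c1(2) c2(2) by (simp add: fun_eq_iff)
    have qa: "q a = 0" unfolding a_def avg_scale avg_diff c1(3) c2(3) by (simp add: fun_eq_iff)
    have inA: "(a, - a) \<in> ?A" using A aL pa qa by blast
    have inB: "(p X, q Y) \<in> ?B" using XY by blast
    have inC: "(u - p u, u - q u) \<in> ?C" using uL by blast
    have X'w: "X w - p X w = a1 w + x1 w + y1 w" for w using c1(6) unfolding X'_def by (metis minus_apply plus_fun_apply)
    have Y'w: "Y w - q Y w = a2 w + x2 w + y2 w" for w using c2(6) unfolding Y'_def by (metis minus_apply plus_fun_apply)
    have x1w: "x1 w = - p y1 w" for w using e1 by simp
    have y2w: "y2 w = - q x2 w" for w using e2 by simp
    have Xs: "X w = p X w + a1 w - p y1 w + y1 w" for w using X'w[of w] x1w[of w] by (simp add: algebra_simps)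
    have Ys: "Y w = q Y w + a2 w + x2 w - q x2 w" for w using Y'w[of w] y2w[of w] by (simp add: algebra_simps)
    have "X = a + p X + (u - p u)"
    proof
      fix w show "X w = (a + p X + (u - p u)) w"
        unfolding pu Xs[of w] by (simp add: a_def u_def h_def field_simps)
    qed
    moreover have "Y = - a + q Y + (u - q u)"
    proof
      fix w show "Y w = (- a + q Y + (u - q u)) w"
        unfolding qu Ys[of w] by (simp add: a_def u_def h_def field_simps)
    qed
    ultimately have "v = (a, - a) + (p X, q Y) + (u - p u, u - q u)" using XY by simp
    then show ?thesis using inA inB inC by blast
  qed
qed

end

theorem lemma4p7:
  fixes m n :: nat
  assumes "m \<ge> 2" and "n \<ge> 3"
  defines "L \<equiv> l2 m n"
  defines "p \<equiv> pP m n" and "q \<equiv> qQ m n"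
  defines "H1 \<equiv> {(a, - a) | a. a \<in> (\<lambda>u. u - p u) ` L \<inter> (\<lambda>u. u - q u) ` L}"
  defines "H2 \<equiv> {(c, - c) | c. c \<in> {x + y | x y. x \<in> p ` L \<and> y \<in> q ` L}}"
  defines "H2' \<equiv> {(p w, q v) | v w. v \<in> L \<and> w \<in> L}"
  defines "H3 \<equiv> {(b, b) | b. b \<in> L}"
  defines "H3' \<equiv> {(u - p u, u - q u) | u. u \<in> L}"
  shows "orth_dsum3 (L \<times> L) H1 H2 H3 \<and> orth_dsum3 (L \<times> L) H1 H2' H3'"
proof -
  have F: "fp m n" using assms(1,2) unfolding fp_def by simp
  show ?thesis
    unfolding H1_def H2_def H2'_def H3_def H3'_def p_def q_def pP_def qQ_def L_def
    using fp.part1[OF F] fp.part2[OF F] by (rule conjI)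
qed

end
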